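(* Let $C$ be a quasi-category and $c\in C_0$ a vertex. Then for every $n\geq2$ the homotopy monoid $\tau_n(C^e,c)$ is a group.
   Context: A stratified simplicial set is a pair $(X,tX)$ where $X$ is a simplicial set and $tX$ is a set of simplices of $X$ (thin simplices) containing all degenerate simplices and no $0$-simplices; stratified maps are simplicial maps preserving thin simplices. For a quasi-category $C$, $C^e$ is the stratified simplicial set with underlying simplicial set $C$ whose thin simplices are the degenerate simplices, all simplices of dimension $\ge 2$, and the $1$-simplices of $C$ that are equivalences (isomorphisms in the homotopy category of $C$); $C^e$ is a weak complicial set. In particular every simplex of $C^e$ of dimension $\geq 2$ is thin. For $n\ge1$, $\Delta[n]_t$ is $\Delta[n]$ with thin simplices the degenerate ones and $\mathrm{Id}_{[n]}$. For $k\in[n]$, $\Delta^k[n]$ is $\Delta[n]$ with thin simplices the degenerate ones and all $\alpha:[m]\to[n]$ with $\{k-1,k,k+1\}\cap[n]\subset\mathrm{Im}(\alpha)$. The product $X\circledast Y$ has underlying simplicial set $X\times Y$, with $(x,y)$ thin iff $x$ and $y$ are thin. For stratified maps $f,g:A\to X$ and an inclusion $B\hookrightarrow A$ with $f|_B=g|_B$, $f\sim_B g$ means there is a stratified map $H:A\circledast\Delta[1]_t\to X$ with $H|_{A\times\{0\}}=f$, $H|_{A\times\{1\}}=g$ and $H|_{B\circledast\Delta[1]_t}=f|_B\circ\mathrm{proj}_B$; $n$-simplices are regarded as stratified maps from $\Delta[n]$ with only degenerate simplices thin. For a weak complicial set $X$, vertex $x$, and $n\ge1$, $\tau_n(X,x)$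 is the set of $\sim_{\partial\Delta[n]}$-classes of $n$-simplices $\alpha$ whose restriction to $\partial\Delta[n]$ is constant at $x$, with multiplication $[\alpha][\beta]=[d_n\theta]$ where $\theta:\Delta^n[n+1]\to X$ is any stratified map with $d_{n-1}\theta=\alpha$, $d_{n+1}\theta=\beta$, and $d_i\theta$ constant at $x$ for $i\notin\{n-1,n,n+1\}$; this is a monoid with unit the class of the constant simplex at $x$. *)

theory Defs
  imports "HOL-Algebra.Group"
begin

text \<open>A simplicial operator alpha : [m] -> [n] is a monotone map, represented
  extensionally as a function nat => nat that is 0 outside {0..m}.\<close>

definition ops :: "nat \<Rightarrow> nat \<Rightarrow> (nat \<Rightarrow> nat) set" where
  "ops m n = {\<alpha>. (\<forall>i\<le>m. \<alpha> i \<le> n) \<and> (\<forall>i j. i \<le> j \<longrightarrow> j \<le> m \<longrightarrow> \<alpha> i \<le> \<alpha> j)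
                \<and> (\<forall>i. m < i \<longrightarrow> \<alpha> i = 0)}"

definition idop :: "nat \<Rightarrow> nat \<Rightarrow> nat" where
  "idop n = (\<lambda>i. if i \<le> n then i else 0)"

definition cmp :: "nat \<Rightarrow> (nat \<Rightarrow> nat) \<Rightarrow> (nat \<Rightarrow> nat) \<Rightarrow> nat \<Rightarrow> nat" where
  "cmp k \<alpha> \<beta> = (\<lambda>i. if i \<le> k then \<alpha> (\<beta> i) else 0)"

text \<open>Simp X n = set of n-simplices; Op X m n alpha x = x.alpha for alpha : [m] -> [n].\<close>
record 'a sset =
  Simp :: "nat \<Rightarrow> 'a set"
  Op :: "nat \<Rightarrow> nat \<Rightarrow> (nat \<Rightarrow> nat) \<Rightarrow> 'a \<Rightarrow> 'a"

record 'a ssset = "'a sset" +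
  Thin :: "nat \<Rightarrow> 'a set"

definition simplicial_set :: "('a, 'z) sset_scheme \<Rightarrow> bool" where
  "simplicial_set X \<longleftrightarrow>
     (\<forall>m n \<alpha> x. \<alpha> \<in> ops m n \<longrightarrow> x \<in> Simp X n \<longrightarrow> Op X m n \<alpha> x \<in> Simp X m) \<and>
     (\<forall>n x. x \<in> Simp X n \<longrightarrow> Op X n n (idop n) x = x) \<and>
     (\<forall>k m n \<alpha> \<beta> x. \<alpha> \<in> ops m n \<longrightarrow> \<beta> \<in> ops k m \<longrightarrow> x \<in> Simp X n \<longrightarrow>
        Op X k m \<beta> (Op X m n \<alpha> x) = Op X k n (cmp k \<alpha> \<beta>) x)"

definition degenerate :: "('a, 'z) sset_scheme \<Rightarrow> nat \<Rightarrow> 'a \<Rightarrow> bool" where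
  "degenerate X m x \<longleftrightarrow> (\<exists>m' < m. \<exists>\<alpha> \<in> ops m m'. \<exists>y \<in> Simp X m'. x = Op X m m' \<alpha> y)"

definition delta_face :: "nat \<Rightarrow> nat \<Rightarrow> nat \<Rightarrow> nat" where
  "delta_face m i = (\<lambda>j. if m < j then 0 else if j < i then j else Suc j)"

definition face :: "('a, 'z) sset_scheme \<Rightarrow> nat \<Rightarrow> nat \<Rightarrow> 'a \<Rightarrow> 'a" where
  "face X m i x = Op X m (Suc m) (delta_face m i) x"

definition cst :: "('a, 'z) sset_scheme \<Rightarrow> nat \<Rightarrow> 'a \<Rightarrow> 'a" where
  "cst X m x = Op X m 0 (\<lambda>i. 0) x"

definition stratified :: "'a ssset \<Rightarrow> bool" where
  "stratified X \<longleftrightarrow> simplicial_set X \<and> (\<forall>m. Thin X m \<subseteq> Simp X m) \<and>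
     (\<forall>m x. x \<in> Simp X m \<longrightarrow> degenerate X m x \<longrightarrow> x \<in> Thin X m) \<and> Thin X 0 = {}"

definition smap :: "'a ssset \<Rightarrow> 'b ssset \<Rightarrow> (nat \<Rightarrow> 'a \<Rightarrow> 'b) \<Rightarrow> bool" where
  "smap A X f \<longleftrightarrow>
     (\<forall>m a. a \<in> Simp A m \<longrightarrow> f m a \<in> Simp X m) \<and>
     (\<forall>m n \<alpha> a. \<alpha> \<in> ops m n \<longrightarrow> a \<in> Simp A n \<longrightarrow> f m (Op A m n \<alpha> a) = Op X m n \<alpha> (f n a)) \<and>
     (\<forall>m a. a \<in> Thin A m \<longrightarrow> f m a \<in> Thin X m)"

definition delta_sset :: "nat \<Rightarrow> (nat \<Rightarrow> nat) sset" where
  "delta_sset n = \<lparr>Simp = (\<lambda>m. ops m n), Op = (\<lambda>m k \<beta> \<alpha>. cmp m \<alpha> \<beta>)\<rparr>"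

definition degen_std :: "nat \<Rightarrow> nat \<Rightarrow> (nat \<Rightarrow> nat) set" where
  "degen_std n m = {\<alpha> \<in> ops m n. degenerate (delta_sset n) m \<alpha>}"

definition Delta_min :: "nat \<Rightarrow> (nat \<Rightarrow> nat) ssset" where
  "Delta_min n = \<lparr>Simp = (\<lambda>m. ops m n), Op = (\<lambda>m k \<beta> \<alpha>. cmp m \<alpha> \<beta>),
                  Thin = degen_std n\<rparr>"

definition Delta_t :: "nat \<Rightarrow> (nat \<Rightarrow> nat) ssset" where
  "Delta_t n = \<lparr>Simp = (\<lambda>m. ops m n), Op = (\<lambda>m k \<beta> \<alpha>. cmp m \<alpha> \<beta>),
                Thin = (\<lambda>m. degen_std n m \<union> (if m = n then {idop n} else {}))\<rparr>"

definition Delta_k :: "nat \<Rightarrow> nat \<Rightarrow> (nat \<Rightarrow> nat) ssset" where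
  "Delta_k k n = \<lparr>Simp = (\<lambda>m. ops m n), Op = (\<lambda>m k \<beta> \<alpha>. cmp m \<alpha> \<beta>),
                  Thin = (\<lambda>m. degen_std n m \<union>
                     {\<alpha> \<in> ops m n. {k - 1, k, k + 1} \<inter> {0..n} \<subseteq> \<alpha> ` {0..m}})\<rparr>"

definition sprod :: "'a ssset \<Rightarrow> 'b ssset \<Rightarrow> ('a \<times> 'b) ssset" where
  "sprod A B = \<lparr>Simp = (\<lambda>m. Simp A m \<times> Simp B m),
                Op = (\<lambda>m n \<alpha> p. (Op A m n \<alpha> (fst p), Op B m n \<alpha> (snd p))),
                Thin = (\<lambda>m. Thin A m \<times> Thin B m)\<rparr>"

definition yon :: "('a, 'z) sset_scheme \<Rightarrow> nat \<Rightarrow> 'a \<Rightarrow> nat \<Rightarrow> (nat \<Rightarrow> nat) \<Rightarrow> 'a" where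
  "yon X n x = (\<lambda>m \<alpha>. Op X m n \<alpha> x)"

definition boundary :: "nat \<Rightarrow> nat \<Rightarrow> (nat \<Rightarrow> nat) set" where
  "boundary n m = {\<alpha> \<in> ops m n. \<not> ({0..n} \<subseteq> \<alpha> ` {0..m})}"

definition spherical :: "'a ssset \<Rightarrow> nat \<Rightarrow> 'a \<Rightarrow> 'a set" where
  "spherical X n x = {a \<in> Simp X n. \<forall>m. \<forall>\<alpha> \<in> boundary n m. Op X m n \<alpha> a = cst X m x}"

definition htpy :: "'a ssset \<Rightarrow> nat \<Rightarrow> 'a \<Rightarrow> 'a \<Rightarrow> bool" where
  "htpy X n a b \<longleftrightarrow> (\<exists>H. smap (sprod (Delta_min n) (Delta_t 1)) X H \<and>
     (\<forall>m. \<forall>\<alpha> \<in> ops m n. H m (\<alpha>, (\<lambda>i. 0)) = Op X m n \<alpha> a) \<and>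
     (\<forall>m. \<forall>\<alpha> \<in> ops m n. H m (\<alpha>, (\<lambda>i. if i \<le> m then 1 else 0)) = Op X m n \<alpha> b) \<and>
     (\<forall>m. \<forall>\<alpha> \<in> boundary n m. \<forall>\<gamma> \<in> ops m 1. H m (\<alpha>, \<gamma>) = Op X m n \<alpha> a))"

definition tau_equiv :: "'a ssset \<Rightarrow> nat \<Rightarrow> 'a \<Rightarrow> ('a \<times> 'a) set" where
  "tau_equiv X n x =
     (let R = {(a, b). a \<in> spherical X n x \<and> b \<in> spherical X n x \<and> htpy X n a b}
      in (R \<union> R\<inverse>)\<^sup>* \<inter> (spherical X n x \<times> spherical X n x))"

definition tau_mult :: "'a ssset \<Rightarrow> nat \<Rightarrow> 'a \<Rightarrow> 'a set \<Rightarrow> 'a set \<Rightarrow> 'a set" where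
  "tau_mult X n x A B = (SOME Cl. \<exists>a \<in> A. \<exists>b \<in> B. \<exists>\<theta> \<in> Simp X (Suc n).
      smap (Delta_k n (Suc n)) X (yon X (Suc n) \<theta>) \<and>
      face X n (n - 1) \<theta> = a \<and> face X n (Suc n) \<theta> = b \<and>
      (\<forall>i \<le> Suc n. i \<notin> {n - 1, n, Suc n} \<longrightarrow> face X n i \<theta> = cst X n x) \<and>
      Cl = tau_equiv X n x `` {face X n n \<theta>})"

definition tau :: "'a ssset \<Rightarrow> nat \<Rightarrow> 'a \<Rightarrow> 'a set monoid" where
  "tau X n x = \<lparr>carrier = spherical X n x // tau_equiv X n x,
                mult = tau_mult X n x,
                one = tau_equiv X n x `` {cst X n x}\<rparr>"

definition quasi_category :: "'a sset \<Rightarrow> bool" where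
  "quasi_category C \<longleftrightarrow> simplicial_set C \<and>
     (\<forall>n k x. 2 \<le> n \<longrightarrow> 0 < k \<longrightarrow> k < n \<longrightarrow>
        (\<forall>i \<le> n. i \<noteq> k \<longrightarrow> x i \<in> Simp C (n - 1)) \<longrightarrow>
        (\<forall>i j. i < j \<longrightarrow> j \<le> n \<longrightarrow> i \<noteq> k \<longrightarrow> j \<noteq> k \<longrightarrow>
            face C (n - 2) i (x j) = face C (n - 2) (j - 1) (x i)) \<longrightarrow>
        (\<exists>y \<in> Simp C n. \<forall>i \<le> n. i \<noteq> k \<longrightarrow> face C (n - 1) i y = x i))"

text \<open>homotopy of parallel 1-simplices h, h' (Boardman-Vogt homotopy category)\<close>
definition qc_htpc :: "'a sset \<Rightarrow> 'a \<Rightarrow> 'a \<Rightarrow> bool" where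
  "qc_htpc C h h' \<longleftrightarrow> (\<exists>\<rho> \<in> Simp C 2. face C 1 0 \<rho> = cst C 1 (face C 0 0 h) \<and>
                          face C 1 1 \<rho> = h' \<and> face C 1 2 \<rho> = h)"

text \<open>f : x -> y is an isomorphism in the homotopy category ho(C)\<close>
definition qc_equiv :: "'a sset \<Rightarrow> 'a \<Rightarrow> bool" where
  "qc_equiv C f \<longleftrightarrow> f \<in> Simp C 1 \<and>
     (\<exists>g \<in> Simp C 1. \<exists>\<sigma> \<in> Simp C 2. \<exists>\<tau> \<in> Simp C 2.
        face C 0 0 g = face C 0 1 f \<and> face C 0 1 g = face C 0 0 f \<and>
        face C 1 2 \<sigma> = f \<and> face C 1 0 \<sigma> = g \<and>
        qc_htpc C (face C 1 1 \<sigma>) (cst C 1 (face C 0 1 f)) \<and>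
        face C 1 2 \<tau> = g \<and> face C 1 0 \<tau> = f \<and>
        qc_htpc C (face C 1 1 \<tau>) (cst C 1 (face C 0 0 f)))"

definition Ce :: "'a sset \<Rightarrow> 'a ssset" where
  "Ce C = \<lparr>Simp = Simp C, Op = Op C,
           Thin = (\<lambda>m. {x \<in> Simp C m. degenerate C m x \<or> 2 \<le> m \<or> (m = 1 \<and> qc_equiv C x)})\<rparr>"

end

theory Submission
  imports Defs
begin
lemma ops_zero: "(\<lambda>i. 0) \<in> ops m 0" by (simp add: ops_def)

lemma delta_face_ops: "delta_face N j \<in> ops N (Suc N)"
  by (auto simp: ops_def delta_face_def)

lemma cmp_const0: "cmp m (\<lambda>i. 0) \<beta> = (\<lambda>i. 0)"
  by (auto simp: cmp_def)

lemma miss_factor: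
  assumes a: "\<alpha> \<in> ops m (Suc N)" and v: "v \<le> Suc N" and miss: "\<forall>i\<le>m. \<alpha> i \<noteq> v"
  defines "\<beta> \<equiv> (\<lambda>i. if i \<le> m then (if \<alpha> i < v then \<alpha> i else \<alpha> i - 1) else 0)"
  shows "\<beta> \<in> ops m N" "cmp m (delta_face N v) \<beta> = \<alpha>"
proof -
  have a1: "\<And>i. i \<le> m \<Longrightarrow> \<alpha> i \<le> Suc N" and a2: "\<And>i j. i \<le> j \<Longrightarrow> j \<le> m \<Longrightarrow> \<alpha> i \<le> \<alpha> j"
    and a3: "\<And>i. m < i \<Longrightarrow> \<alpha> i = 0" using a unfolding ops_def by auto
  have b1: "\<beta> i \<le> N" if "i \<le> m" for i
    using a1[OF that] miss that v unfolding \<beta>_def by auto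
  have b2: "\<beta> i \<le> \<beta> j" if "i \<le> j" "j \<le> m" for i j
  proof -
    have "\<alpha> i \<le> \<alpha> j" by (rule a2[OF that])
    moreover have "\<alpha> i \<noteq> v" "\<alpha> j \<noteq> v" using miss that by auto
    ultimately show ?thesis using that unfolding \<beta>_def by auto
  qed
  show "\<beta> \<in> ops m N" unfolding ops_def using b1 b2 by (auto simp: \<beta>_def)
  show "cmp m (delta_face N v) \<beta> = \<alpha>"
  proof
    fix i show "cmp m (delta_face N v) \<beta> i = \<alpha> i"
    proof (cases "i \<le> m")
      case True
      then have "\<beta> i \<le> N" by (rule b1)
      moreover have "\<alpha> i \<noteq> v" using miss True by auto
      ultimately show ?thesis using True unfolding cmp_def delta_face_def \<beta>_def by auto
    next
      case False then show ?thesis using a3 by (simp add: cmp_def)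
    qed
  qed
qed

lemma face_face_ops: "i < j \<Longrightarrow> cmp N (delta_face (Suc N) j) (delta_face N i) = cmp N (delta_face (Suc N) i) (delta_face N (j - 1))"
  unfolding fun_eq_iff cmp_def delta_face_def by (auto split: if_splits)

definition sig :: "nat \<Rightarrow> nat \<Rightarrow> nat \<Rightarrow> nat" where
  "sig N k = (\<lambda>i. if i \<le> Suc N then (if i \<le> k then i else i - 1) else 0)"

lemma sig_ops: "k \<le> N \<Longrightarrow> sig N k \<in> ops (Suc N) N"
  unfolding ops_def sig_def by auto

lemma sig_face_id: "j = k \<or> j = Suc k \<Longrightarrow> cmp N (sig N k) (delta_face N j) = idop N"
  unfolding fun_eq_iff cmp_def sig_def delta_face_def idop_def by auto

lemma sig_face_ops: "k \<le> N \<Longrightarrow> cmp N (sig N k) (delta_face N j) \<in> ops N N"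
  unfolding ops_def cmp_def sig_def delta_face_def by auto

lemma sig_face_miss: "k \<le> N \<Longrightarrow> j \<le> Suc N \<Longrightarrow> j \<noteq> k \<Longrightarrow> j \<noteq> Suc k \<Longrightarrow> i \<le> N \<Longrightarrow>
   cmp N (sig N k) (delta_face N j) i \<noteq> (if j < k then j else j - 1)"
  unfolding cmp_def sig_def delta_face_def by auto


locale oqc =
  fixes S :: "'a set" and T :: "'a \<Rightarrow> 'a \<Rightarrow> 'a \<Rightarrow> bool" and u :: 'a
  assumes u: "u \<in> S"
    and s0: "x \<in> S \<Longrightarrow> T x x u"
    and s1: "x \<in> S \<Longrightarrow> T u x x"
    and cp: "x \<in> S \<Longrightarrow> z \<in> S \<Longrightarrow> \<exists>y\<in>S. T x y z"
    and h2: "e01 \<in> S \<Longrightarrow> e02 \<in> S \<Longrightarrow> e03 \<in> S \<Longrightarrow> e12 \<in> S \<Longrightarrow> e13 \<in> S \<Longrightarrow> e23 \<in> S \<Longrightarrow>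
       T e12 e02 e01 \<Longrightarrow> T e23 e13 e12 \<Longrightarrow> T e23 e03 e02 \<Longrightarrow> T e13 e03 e01"
    and h1: "e01 \<in> S \<Longrightarrow> e02 \<in> S \<Longrightarrow> e03 \<in> S \<Longrightarrow> e12 \<in> S \<Longrightarrow> e13 \<in> S \<Longrightarrow> e23 \<in> S \<Longrightarrow>
       T e12 e02 e01 \<Longrightarrow> T e23 e13 e12 \<Longrightarrow> T e13 e03 e01 \<Longrightarrow> T e23 e03 e02"
begin

lemma uniq: "x \<in> S \<Longrightarrow> y \<in> S \<Longrightarrow> y' \<in> S \<Longrightarrow> z \<in> S \<Longrightarrow> T x y z \<Longrightarrow> T x y' z \<Longrightarrow> T y y' u"
  using h2[of u z y' z y x] s0 u by blast

lemma rsym: "f \<in> S \<Longrightarrow> g \<in> S \<Longrightarrow> T f g u \<Longrightarrow> T g f u"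
  using uniq[of f g f u] s0 u by blast

lemma rtrans: "f \<in> S \<Longrightarrow> g \<in> S \<Longrightarrow> h \<in> S \<Longrightarrow> T f g u \<Longrightarrow> T g h u \<Longrightarrow> T f h u"
  using h1[of u u h u g f] s0 u by blast

lemma clos: "x \<in> S \<Longrightarrow> y \<in> S \<Longrightarrow> y' \<in> S \<Longrightarrow> z \<in> S \<Longrightarrow> T x y z \<Longrightarrow> T y y' u \<Longrightarrow> T x y' z"
  using h1[of u z y' z y x] s0 u by blast

lemma cong_x: "x \<in> S \<Longrightarrow> x' \<in> S \<Longrightarrow> y \<in> S \<Longrightarrow> z \<in> S \<Longrightarrow> T x y z \<Longrightarrow> T x x' u \<Longrightarrow> T x' y z"
  using h1[of z z y u x x'] s1 u rsym by blast

lemma cong_z: assumes "x \<in> S" "y \<in> S" "z \<in> S" "z' \<in> S" "T x y z" "T z z' u"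
  shows "T x y z'"
proof -
  obtain w where w: "w \<in> S" "T x w z'" using cp assms by blast
  have "T w y u" using h2[of u z y z' w x] assms w u rsym by blast
  then show ?thesis using clos assms w by blast
qed

lemma assoc: "x \<in> S \<Longrightarrow> y \<in> S \<Longrightarrow> z \<in> S \<Longrightarrow> p \<in> S \<Longrightarrow> q \<in> S \<Longrightarrow> r \<in> S \<Longrightarrow>
   T y p z \<Longrightarrow> T x q p \<Longrightarrow> T x r y \<Longrightarrow> T r q z"
  using h2[of z p q y r x] by blast

lemma lpat: "f \<in> S \<Longrightarrow> g \<in> S \<Longrightarrow> T u f g \<longleftrightarrow> T g f u"
  using uniq[of u g f g] clos[of u g f g] s1 u by blast

end

locale qcat =
  fixes C :: "'a sset" and c :: 'a and n :: nat
  assumes qc: "quasi_category C" and c0: "c \<in> Simp C 0" and n2: "2 \<le> n"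
begin

lemma ss: "simplicial_set C" using qc by (simp add: quasi_category_def)

lemma op_closed: "\<alpha> \<in> ops m N \<Longrightarrow> x \<in> Simp C N \<Longrightarrow> Op C m N \<alpha> x \<in> Simp C m"
  using ss by (simp add: simplicial_set_def)

lemma op_id: "x \<in> Simp C N \<Longrightarrow> Op C N N (idop N) x = x"
  using ss by (simp add: simplicial_set_def)

lemma op_comp: "\<alpha> \<in> ops m N \<Longrightarrow> \<beta> \<in> ops k m \<Longrightarrow> x \<in> Simp C N \<Longrightarrow>
   Op C k m \<beta> (Op C m N \<alpha> x) = Op C k N (cmp k \<alpha> \<beta>) x"
  using ss unfolding simplicial_set_def by blast

lemma cst_simp: "cst C m c \<in> Simp C m"
  unfolding cst_def by (rule op_closed[OF ops_zero c0])

lemma face_simp: "x \<in> Simp C (Suc N) \<Longrightarrow> face C N j x \<in> Simp C N"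
  unfolding face_def by (rule op_closed[OF delta_face_ops])

lemma op_cst: "\<alpha> \<in> ops m M \<Longrightarrow> Op C m M \<alpha> (cst C M c) = cst C m c"
  unfolding cst_def by (simp add: op_comp[OF ops_zero _ c0] cmp_const0)

lemma face_cst: "face C N j (cst C (Suc N) c) = cst C N c"
  unfolding face_def by (rule op_cst[OF delta_face_ops])

lemma lemF:
  assumes a: "\<alpha> \<in> ops m (Suc N)" and v: "v \<le> Suc N" and miss: "\<forall>i\<le>m. \<alpha> i \<noteq> v"
    and x: "x \<in> Simp C (Suc N)" and f: "face C N v x = cst C N c"
  shows "Op C m (Suc N) \<alpha> x = cst C m c"
proof -
  define \<beta> where "\<beta> = (\<lambda>i. if i \<le> m then (if \<alpha> i < v then \<alpha> i else \<alpha> i - 1) else 0)"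
  have b: "\<beta> \<in> ops m N" and e: "cmp m (delta_face N v) \<beta> = \<alpha>"
    using miss_factor[OF a v miss] unfolding \<beta>_def by auto
  have "Op C m (Suc N) \<alpha> x = Op C m N \<beta> (face C N v x)"
    unfolding face_def using op_comp[OF delta_face_ops b x] e by simp
  also have "\<dots> = cst C m c" using f op_cst[OF b] by simp
  finally show ?thesis .
qed


lemma face_face:
  assumes x: "x \<in> Simp C (Suc (Suc N))" and ij: "i < j"
  shows "face C N i (face C (Suc N) j x) = face C N (j - 1) (face C (Suc N) i x)"
proof -
  have "cmp N (delta_face (Suc N) j) (delta_face N i) = cmp N (delta_face (Suc N) i) (delta_face N (j - 1))"
    using ij by (rule face_face_ops)
  moreover have "face C N i (face C (Suc N) j x) = Op C N (Suc (Suc N)) (cmp N (delta_face (Suc N) j) (delta_face N i)) x"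
    unfolding face_def by (rule op_comp[OF delta_face_ops delta_face_ops x])
  moreover have "face C N (j - 1) (face C (Suc N) i x) = Op C N (Suc (Suc N)) (cmp N (delta_face (Suc N) i) (delta_face N (j - 1))) x"
    unfolding face_def by (rule op_comp[OF delta_face_ops delta_face_ops x])
  ultimately show ?thesis by simp
qed

definition allcst :: "nat \<Rightarrow> 'a \<Rightarrow> bool" where
  "allcst N y \<longleftrightarrow> (\<forall>j \<le> Suc N. face C N j y = cst C N c)"

lemma allcst_cst: "allcst N (cst C (Suc N) c)"
  by (simp add: allcst_def face_cst)

lemma missing_face:
  assumes th: "\<theta> \<in> Simp C (Suc (Suc N))" and h: "h \<le> Suc (Suc N)"
    and oth: "\<forall>i \<le> Suc (Suc N). i \<noteq> h \<longrightarrow> allcst N (face C (Suc N) i \<theta>)"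
  shows "allcst N (face C (Suc N) h \<theta>)"
  unfolding allcst_def
proof (intro allI impI)
  fix j assume j: "j \<le> Suc N"
  show "face C N j (face C (Suc N) h \<theta>) = cst C N c"
  proof (cases "j < h")
    case True
    then have "face C N j (face C (Suc N) h \<theta>) = face C N (h - 1) (face C (Suc N) j \<theta>)"
      by (rule face_face[OF th])
    also have "\<dots> = cst C N c"
    proof -
      have "allcst N (face C (Suc N) j \<theta>)" using oth j True by simp
      moreover have "h - 1 \<le> Suc N" using h by simp
      ultimately show ?thesis unfolding allcst_def by blast
    qed
    finally show ?thesis .
  next
    case False
    then have "face C N h (face C (Suc N) (Suc j) \<theta>) = face C N j (face C (Suc N) h \<theta>)"
      using face_face[OF th, of h "Suc j"] by simp
    moreover have "face C N h (face C (Suc N) (Suc j) \<theta>) = cst C N c"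
      using oth j h False unfolding allcst_def by auto
    ultimately show ?thesis by simp
  qed
qed

lemma horn:
  assumes h: "0 < h" "h < Suc (Suc M)"
    and x: "\<forall>i \<le> Suc (Suc M). i \<noteq> h \<longrightarrow> x i \<in> Simp C (Suc M)"
    and out: "\<forall>i \<le> Suc (Suc M). i \<noteq> h \<longrightarrow> (i < k \<or> k + r < i) \<longrightarrow> x i = cst C (Suc M) c"
    and win: "\<forall>i \<le> Suc (Suc M). i \<noteq> h \<longrightarrow> k \<le> i \<longrightarrow> i \<le> k + r \<longrightarrow>
                (\<forall>j \<le> Suc M. (j < k \<or> k + r \<le> j) \<longrightarrow> face C M j (x i) = cst C M c)"
    and cmpt: "\<forall>i j. i < j \<longrightarrow> j \<le> Suc (Suc M) \<longrightarrow> i \<noteq> h \<longrightarrow> j \<noteq> h \<longrightarrow> k \<le> i \<longrightarrow> j \<le> k + r \<longrightarrow>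
                face C M i (x j) = face C M (j - 1) (x i)"
  shows "\<exists>y \<in> Simp C (Suc (Suc M)). \<forall>i \<le> Suc (Suc M). i \<noteq> h \<longrightarrow> face C (Suc M) i y = x i"
proof -
  have A: "\<forall>i j. i < j \<longrightarrow> j \<le> Suc (Suc M) \<longrightarrow> i \<noteq> h \<longrightarrow> j \<noteq> h \<longrightarrow>
                face C M i (x j) = face C M (j - 1) (x i)"
  proof (intro allI impI)
    fix i j assume ij: "i < j" "j \<le> Suc (Suc M)" "i \<noteq> h" "j \<noteq> h"
    show "face C M i (x j) = face C M (j - 1) (x i)"
    proof (cases "i < k")
      case True
      have l: "face C M i (x j) = cst C M c"
      proof (cases "k \<le> j \<and> j \<le> k + r")
        case True
        then show ?thesis using win ij \<open>i < k\<close> by auto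
      next
        case False
        then show ?thesis using out ij face_cst by auto
      qed
      have "x i = cst C (Suc M) c" using out ij True by auto
      then show ?thesis using l face_cst by simp
    next
      case False
      show ?thesis
      proof (cases "j \<le> k + r")
        case True
        then show ?thesis using cmpt[rule_format, of i j] ij False by simp
      next
        case F2: False
        have "x j = cst C (Suc M) c" using out ij F2 by auto
        moreover have "face C M (j - 1) (x i) = cst C M c"
        proof (cases "i \<le> k + r")
          case True
          then show ?thesis using win ij False F2 by auto
        next
          case False
          then show ?thesis using out ij face_cst by auto
        qed
        ultimately show ?thesis using face_cst by simp
      qed
    qed
  qed
  show ?thesis
  proof -
    have Q: "\<forall>n k x. 2 \<le> n \<longrightarrow> 0 < k \<longrightarrow> k < n \<longrightarrow>
        (\<forall>i \<le> n. i \<noteq> k \<longrightarrow> x i \<in> Simp C (n - 1)) \<longrightarrow>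
        (\<forall>i j. i < j \<longrightarrow> j \<le> n \<longrightarrow> i \<noteq> k \<longrightarrow> j \<noteq> k \<longrightarrow>
            face C (n - 2) i (x j) = face C (n - 2) (j - 1) (x i)) \<longrightarrow>
        (\<exists>y \<in> Simp C n. \<forall>i \<le> n. i \<noteq> k \<longrightarrow> face C (n - 1) i y = x i)"
      using qc unfolding quasi_category_def by blast
    have e1: "Suc (Suc M) - 1 = Suc M" "Suc (Suc M) - 2 = M" by simp_all
    have t: "2 \<le> Suc (Suc M)" by simp
    have Q2: "(\<forall>i \<le> Suc (Suc M). i \<noteq> h \<longrightarrow> x i \<in> Simp C (Suc M)) \<longrightarrow>
        (\<forall>i j. i < j \<longrightarrow> j \<le> Suc (Suc M) \<longrightarrow> i \<noteq> h \<longrightarrow> j \<noteq> h \<longrightarrow>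
            face C M i (x j) = face C M (j - 1) (x i)) \<longrightarrow>
        (\<exists>y \<in> Simp C (Suc (Suc M)). \<forall>i \<le> Suc (Suc M). i \<noteq> h \<longrightarrow> face C (Suc M) i y = x i)"
      using mp[OF mp[OF mp[OF Q[THEN spec, THEN spec, THEN spec, of "Suc (Suc M)" h x, unfolded e1] t] h(1)] h(2)] .
    show ?thesis using mp[OF mp[OF Q2 x] A] .
  qed
qed


lemma degen:
  assumes k: "k \<le> Suc M" and x: "x \<in> Simp C (Suc M)" and ac: "allcst M x"
  defines "s \<equiv> Op C (Suc (Suc M)) (Suc M) (sig (Suc M) k) x"
  shows "s \<in> Simp C (Suc (Suc M))" "face C (Suc M) k s = x" "face C (Suc M) (Suc k) s = x"
    "\<And>j. j \<le> Suc (Suc M) \<Longrightarrow> j \<noteq> k \<Longrightarrow> j \<noteq> Suc k \<Longrightarrow> face C (Suc M) j s = cst C (Suc M) c"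
proof -
  have fs: "face C (Suc M) j s = Op C (Suc M) (Suc M) (cmp (Suc M) (sig (Suc M) k) (delta_face (Suc M) j)) x" for j
    unfolding s_def face_def by (rule op_comp[OF sig_ops[OF k] delta_face_ops x])
  show "s \<in> Simp C (Suc (Suc M))" unfolding s_def by (rule op_closed[OF sig_ops[OF k] x])
  show "face C (Suc M) k s = x" "face C (Suc M) (Suc k) s = x"
    unfolding fs by (simp_all add: sig_face_id op_id[OF x])
  fix j assume j: "j \<le> Suc (Suc M)" "j \<noteq> k" "j \<noteq> Suc k"
  show "face C (Suc M) j s = cst C (Suc M) c"
    unfolding fs
  proof (rule lemF[OF sig_face_ops[OF k] _ _ x])
    show "(if j < k then j else j - 1) \<le> Suc M" using j k by auto
    show "\<forall>i\<le>Suc M. cmp (Suc M) (sig (Suc M) k) (delta_face (Suc M) j) i \<noteq> (if j < k then j else j - 1)"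
      using sig_face_miss[OF k j(1) j(2) j(3)] by blast
    show "face C M (if j < k then j else j - 1) x = cst C M c"
      using ac j k unfolding allcst_def by auto
  qed
qed

lemma nM: "n = Suc (n - 1)" using n2 by simp

definition sph :: "'a \<Rightarrow> bool" where
  "sph y \<longleftrightarrow> y \<in> Simp C n \<and> allcst (n - 1) y"

definition Tri :: "nat \<Rightarrow> 'a \<Rightarrow> 'a \<Rightarrow> 'a \<Rightarrow> bool" where
  "Tri k x y z \<longleftrightarrow> (\<exists>\<theta> \<in> Simp C (Suc n). face C n k \<theta> = x \<and> face C n (Suc k) \<theta> = y \<and>
      face C n (Suc (Suc k)) \<theta> = z \<and>
      (\<forall>j \<le> Suc n. j \<noteq> k \<longrightarrow> j \<noteq> Suc k \<longrightarrow> j \<noteq> Suc (Suc k) \<longrightarrow> face C n j \<theta> = cst C n c))"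

lemma sph_cst: "sph (cst C n c)"
  unfolding sph_def using allcst_cst[of "n - 1"] nM cst_simp by (metis)

lemma tri_s0: assumes "k \<le> n - 1" "sph x" shows "Tri k x x (cst C n c)"
proof -
  obtain M where M: "n = Suc M" using nM by blast
  have k: "k \<le> Suc M" using assms M by simp
  have x: "x \<in> Simp C (Suc M)" "allcst M x" using assms M unfolding sph_def by auto
  note d = degen[OF k x, folded M]
  show ?thesis unfolding Tri_def
    apply (rule bexI[OF _ d(1)])
    using d(2,3) d(4)[of "Suc (Suc k)"] d(4) assms M by auto
qed

lemma tri_s1: assumes "k \<le> n - 1" "sph x" shows "Tri k (cst C n c) x x"
proof -
  obtain M where M: "n = Suc M" using nM by blast
  have k: "Suc k \<le> Suc M" using assms M by simp
  have x: "x \<in> Simp C (Suc M)" "allcst M x" using assms M unfolding sph_def by auto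
  note d = degen[OF k x, folded M]
  show ?thesis unfolding Tri_def
    apply (rule bexI[OF _ d(1)])
    using d(2,3) d(4)[of k] d(4) assms M by auto
qed


lemma win_face:
  assumes th: "\<Theta> \<in> Simp C (Suc (Suc N))" and h: "k \<le> h" "h \<le> k + r"
    and out: "\<forall>i \<le> Suc (Suc N). (i < k \<or> k + r < i) \<longrightarrow> face C (Suc N) i \<Theta> = cst C (Suc N) c"
    and j: "j \<le> Suc N" "j < k \<or> k + r \<le> j"
  shows "face C N j (face C (Suc N) h \<Theta>) = cst C N c"
proof (cases "j < k")
  case True
  then have "face C N j (face C (Suc N) h \<Theta>) = face C N (h - 1) (face C (Suc N) j \<Theta>)"
    using h by (intro face_face[OF th]) simp
  also have "\<dots> = cst C N c" using out True j h by (simp add: face_cst)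
  finally show ?thesis .
next
  case False
  then have "face C N h (face C (Suc N) (Suc j) \<Theta>) = face C N j (face C (Suc N) h \<Theta>)"
    using face_face[OF th, of h "Suc j"] j h by simp
  moreover have "face C N h (face C (Suc N) (Suc j) \<Theta>) = cst C N c"
    using out False j h by (simp add: face_cst)
  ultimately show ?thesis by simp
qed

lemma sph_simp: "sph x \<Longrightarrow> x \<in> Simp C n" by (simp add: sph_def)

lemma sph_face: "sph x \<Longrightarrow> j \<le> n \<Longrightarrow> face C (n - 1) j x = cst C (n - 1) c"
  unfolding sph_def allcst_def using nM by (metis)

lemma tri_comp:
  assumes k: "k \<le> n - 1" and x: "sph x" and z: "sph z"
  shows "\<exists>y. sph y \<and> Tri k x y z"
proof -
  obtain M where M: "n = Suc M" using nM by blast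
  define xs where "xs = (\<lambda>i. if i = k then x else if i = Suc (Suc k) then z else cst C (Suc M) c)"
  have xS: "x \<in> Simp C (Suc M)" "z \<in> Simp C (Suc M)" "allcst M x" "allcst M z"
    using x z M unfolding sph_def by auto
  have "\<exists>y \<in> Simp C (Suc (Suc M)). \<forall>i \<le> Suc (Suc M). i \<noteq> Suc k \<longrightarrow> face C (Suc M) i y = xs i"
  proof (rule horn[where k = k and r = 2])
    show "0 < Suc k" by simp
    show "Suc k < Suc (Suc M)" using k M by simp
    show "\<forall>i\<le>Suc (Suc M). i \<noteq> Suc k \<longrightarrow> xs i \<in> Simp C (Suc M)"
      using xS cst_simp by (auto simp: xs_def)
    show "\<forall>i\<le>Suc (Suc M). i \<noteq> Suc k \<longrightarrow> (i < k \<or> k + 2 < i) \<longrightarrow> xs i = cst C (Suc M) c"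
      by (auto simp: xs_def)
    show "\<forall>i\<le>Suc (Suc M). i \<noteq> Suc k \<longrightarrow> k \<le> i \<longrightarrow> i \<le> k + 2 \<longrightarrow>
        (\<forall>j\<le>Suc M. (j < k \<or> k + 2 \<le> j) \<longrightarrow> face C M j (xs i) = cst C M c)"
      using xS unfolding xs_def allcst_def by (auto simp: face_cst)
    show "\<forall>i j. i < j \<longrightarrow> j \<le> Suc (Suc M) \<longrightarrow> i \<noteq> Suc k \<longrightarrow> j \<noteq> Suc k \<longrightarrow> k \<le> i \<longrightarrow> j \<le> k + 2 \<longrightarrow>
        face C M i (xs j) = face C M (j - 1) (xs i)"
    proof (intro allI impI)
      fix i j assume a: "i < j" "j \<le> Suc (Suc M)" "i \<noteq> Suc k" "j \<noteq> Suc k" "k \<le> i" "j \<le> k + 2"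
      then have "i = k" "j = Suc (Suc k)" by auto
      then show "face C M i (xs j) = face C M (j - 1) (xs i)"
        using xS a unfolding xs_def allcst_def by auto
    qed
  qed
  then obtain \<theta> where th: "\<theta> \<in> Simp C (Suc (Suc M))"
    and f: "\<forall>i \<le> Suc (Suc M). i \<noteq> Suc k \<longrightarrow> face C (Suc M) i \<theta> = xs i" by blast
  define y where "y = face C (Suc M) (Suc k) \<theta>"
  have "allcst M y" unfolding y_def
  proof (rule missing_face[OF th])
    show "Suc k \<le> Suc (Suc M)" using k M by simp
    show "\<forall>i\<le>Suc (Suc M). i \<noteq> Suc k \<longrightarrow> allcst M (face C (Suc M) i \<theta>)"
      using f xS allcst_cst unfolding xs_def by auto
  qed
  moreover have "y \<in> Simp C (Suc M)" unfolding y_def by (rule face_simp[OF th])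
  ultimately have "sph y" using M unfolding sph_def by simp
  moreover have "Tri k x y z"
  proof -
    have thn: "\<theta> \<in> Simp C (Suc n)" using th M by simp
    have fn: "\<forall>i \<le> Suc n. i \<noteq> Suc k \<longrightarrow> face C n i \<theta> = xs i" using f M by simp
    have yn: "y = face C n (Suc k) \<theta>" using y_def M by simp
    show ?thesis unfolding Tri_def
      apply (rule bexI[OF _ thn])
      using fn k M unfolding xs_def yn by auto
  qed
  ultimately show ?thesis by blast
qed


lemma tri_h2:
  assumes k: "k \<le> n - 1" and F3: "Tri k e12 e02 e01" and F0: "Tri k e23 e13 e12" and F1: "Tri k e23 e03 e02"
  shows "Tri k e13 e03 e01"
proof -
  obtain t3 where t3: "t3 \<in> Simp C (Suc n)" "face C n k t3 = e12" "face C n (Suc k) t3 = e02"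
      "face C n (Suc (Suc k)) t3 = e01"
      "\<forall>j \<le> Suc n. j \<noteq> k \<longrightarrow> j \<noteq> Suc k \<longrightarrow> j \<noteq> Suc (Suc k) \<longrightarrow> face C n j t3 = cst C n c"
    using F3 unfolding Tri_def by blast
  obtain t0 where t0: "t0 \<in> Simp C (Suc n)" "face C n k t0 = e23" "face C n (Suc k) t0 = e13"
      "face C n (Suc (Suc k)) t0 = e12"
      "\<forall>j \<le> Suc n. j \<noteq> k \<longrightarrow> j \<noteq> Suc k \<longrightarrow> j \<noteq> Suc (Suc k) \<longrightarrow> face C n j t0 = cst C n c"
    using F0 unfolding Tri_def by blast
  obtain t1 where t1: "t1 \<in> Simp C (Suc n)" "face C n k t1 = e23" "face C n (Suc k) t1 = e03"
      "face C n (Suc (Suc k)) t1 = e02"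
      "\<forall>j \<le> Suc n. j \<noteq> k \<longrightarrow> j \<noteq> Suc k \<longrightarrow> j \<noteq> Suc (Suc k) \<longrightarrow> face C n j t1 = cst C n c"
    using F1 unfolding Tri_def by blast
  define xs where "xs = (\<lambda>i. if i = k then t0 else if i = Suc k then t1 else if i = k + 3 then t3
     else cst C (Suc n) c)"
  have "\<exists>y \<in> Simp C (Suc (Suc n)). \<forall>i \<le> Suc (Suc n). i \<noteq> Suc (Suc k) \<longrightarrow> face C (Suc n) i y = xs i"
  proof (rule horn[where k = k and r = 3])
    show "0 < Suc (Suc k)" by simp
    show "Suc (Suc k) < Suc (Suc n)" using k n2 by simp
    show "\<forall>i\<le>Suc (Suc n). i \<noteq> Suc (Suc k) \<longrightarrow> xs i \<in> Simp C (Suc n)"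
      using t0 t1 t3 cst_simp by (auto simp: xs_def)
    show "\<forall>i\<le>Suc (Suc n). i \<noteq> Suc (Suc k) \<longrightarrow> (i < k \<or> k + 3 < i) \<longrightarrow> xs i = cst C (Suc n) c"
      by (auto simp: xs_def)
    show "\<forall>i\<le>Suc (Suc n). i \<noteq> Suc (Suc k) \<longrightarrow> k \<le> i \<longrightarrow> i \<le> k + 3 \<longrightarrow>
        (\<forall>j\<le>Suc n. (j < k \<or> k + 3 \<le> j) \<longrightarrow> face C n j (xs i) = cst C n c)"
      using t0(5) t1(5) t3(5) unfolding xs_def by auto
    show "\<forall>i j. i < j \<longrightarrow> j \<le> Suc (Suc n) \<longrightarrow> i \<noteq> Suc (Suc k) \<longrightarrow> j \<noteq> Suc (Suc k) \<longrightarrow> k \<le> i \<longrightarrow> j \<le> k + 3 \<longrightarrow>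
        face C n i (xs j) = face C n (j - 1) (xs i)"
    proof (intro allI impI)
      fix i j assume a: "i < j" "j \<le> Suc (Suc n)" "i \<noteq> Suc (Suc k)" "j \<noteq> Suc (Suc k)" "k \<le> i" "j \<le> k + 3"
      then have "(i = k \<and> j = Suc k) \<or> (i = k \<and> j = k + 3) \<or> (i = Suc k \<and> j = k + 3)" by auto
      then show "face C n i (xs j) = face C n (j - 1) (xs i)"
        using t0 t1 t3 unfolding xs_def by (auto simp: numeral_3_eq_3)
    qed
  qed
  then obtain \<Theta> where th: "\<Theta> \<in> Simp C (Suc (Suc n))"
    and f: "\<forall>i \<le> Suc (Suc n). i \<noteq> Suc (Suc k) \<longrightarrow> face C (Suc n) i \<Theta> = xs i" by blast
  define y where "y = face C (Suc n) (Suc (Suc k)) \<Theta>"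
  have kn: "k + 3 \<le> Suc (Suc n)" using k n2 by simp
  have fk: "face C (Suc n) k \<Theta> = t0" "face C (Suc n) (Suc k) \<Theta> = t1" "face C (Suc n) (k + 3) \<Theta> = t3"
    using f kn unfolding xs_def by auto
  have y0: "face C n k y = e13"
    using face_face[OF th, of k "Suc (Suc k)"] fk t0 unfolding y_def by simp
  have y1: "face C n (Suc k) y = e03"
    using face_face[OF th, of "Suc k" "Suc (Suc k)"] fk t1 unfolding y_def by simp
  have y2: "face C n (Suc (Suc k)) y = e01"
    using face_face[OF th, of "Suc (Suc k)" "k + 3"] fk t3 unfolding y_def by (simp add: numeral_3_eq_3)
  have yo: "\<forall>j \<le> Suc n. j \<noteq> k \<longrightarrow> j \<noteq> Suc k \<longrightarrow> j \<noteq> Suc (Suc k) \<longrightarrow> face C n j y = cst C n c"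
  proof (intro allI impI)
    fix j assume j: "j \<le> Suc n" "j \<noteq> k" "j \<noteq> Suc k" "j \<noteq> Suc (Suc k)"
    show "face C n j y = cst C n c" unfolding y_def
    proof (rule win_face[OF th, where k = k and r = 3])
      show "\<forall>i\<le>Suc (Suc n). (i < k \<or> k + 3 < i) \<longrightarrow> face C (Suc n) i \<Theta> = cst C (Suc n) c"
        using f unfolding xs_def by auto
    qed (use j in auto)
  qed
  show ?thesis unfolding Tri_def
    using face_simp[OF th] y0 y1 y2 yo unfolding y_def by blast
qed

lemma tri_h1:
  assumes k: "k \<le> n - 1" and F3: "Tri k e12 e02 e01" and F0: "Tri k e23 e13 e12" and F2: "Tri k e13 e03 e01"
  shows "Tri k e23 e03 e02"
proof -
  obtain t3 where t3: "t3 \<in> Simp C (Suc n)" "face C n k t3 = e12" "face C n (Suc k) t3 = e02"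
      "face C n (Suc (Suc k)) t3 = e01"
      "\<forall>j \<le> Suc n. j \<noteq> k \<longrightarrow> j \<noteq> Suc k \<longrightarrow> j \<noteq> Suc (Suc k) \<longrightarrow> face C n j t3 = cst C n c"
    using F3 unfolding Tri_def by blast
  obtain t0 where t0: "t0 \<in> Simp C (Suc n)" "face C n k t0 = e23" "face C n (Suc k) t0 = e13"
      "face C n (Suc (Suc k)) t0 = e12"
      "\<forall>j \<le> Suc n. j \<noteq> k \<longrightarrow> j \<noteq> Suc k \<longrightarrow> j \<noteq> Suc (Suc k) \<longrightarrow> face C n j t0 = cst C n c"
    using F0 unfolding Tri_def by blast
  obtain t2 where t2: "t2 \<in> Simp C (Suc n)" "face C n k t2 = e13" "face C n (Suc k) t2 = e03"
      "face C n (Suc (Suc k)) t2 = e01"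
      "\<forall>j \<le> Suc n. j \<noteq> k \<longrightarrow> j \<noteq> Suc k \<longrightarrow> j \<noteq> Suc (Suc k) \<longrightarrow> face C n j t2 = cst C n c"
    using F2 unfolding Tri_def by blast
  define xs where "xs = (\<lambda>i. if i = k then t0 else if i = Suc (Suc k) then t2 else if i = k + 3 then t3
     else cst C (Suc n) c)"
  have "\<exists>y \<in> Simp C (Suc (Suc n)). \<forall>i \<le> Suc (Suc n). i \<noteq> Suc k \<longrightarrow> face C (Suc n) i y = xs i"
  proof (rule horn[where k = k and r = 3])
    show "0 < Suc k" by simp
    show "Suc k < Suc (Suc n)" using k n2 by simp
    show "\<forall>i\<le>Suc (Suc n). i \<noteq> Suc k \<longrightarrow> xs i \<in> Simp C (Suc n)"
      using t0 t2 t3 cst_simp by (auto simp: xs_def)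
    show "\<forall>i\<le>Suc (Suc n). i \<noteq> Suc k \<longrightarrow> (i < k \<or> k + 3 < i) \<longrightarrow> xs i = cst C (Suc n) c"
      by (auto simp: xs_def)
    show "\<forall>i\<le>Suc (Suc n). i \<noteq> Suc k \<longrightarrow> k \<le> i \<longrightarrow> i \<le> k + 3 \<longrightarrow>
        (\<forall>j\<le>Suc n. (j < k \<or> k + 3 \<le> j) \<longrightarrow> face C n j (xs i) = cst C n c)"
      using t0(5) t2(5) t3(5) unfolding xs_def by auto
    show "\<forall>i j. i < j \<longrightarrow> j \<le> Suc (Suc n) \<longrightarrow> i \<noteq> Suc k \<longrightarrow> j \<noteq> Suc k \<longrightarrow> k \<le> i \<longrightarrow> j \<le> k + 3 \<longrightarrow>
        face C n i (xs j) = face C n (j - 1) (xs i)"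
    proof (intro allI impI)
      fix i j assume a: "i < j" "j \<le> Suc (Suc n)" "i \<noteq> Suc k" "j \<noteq> Suc k" "k \<le> i" "j \<le> k + 3"
      then have "(i = k \<and> j = Suc (Suc k)) \<or> (i = k \<and> j = k + 3) \<or> (i = Suc (Suc k) \<and> j = k + 3)" by auto
      then show "face C n i (xs j) = face C n (j - 1) (xs i)"
        using t0 t2 t3 unfolding xs_def by (auto simp: numeral_3_eq_3)
    qed
  qed
  then obtain \<Theta> where th: "\<Theta> \<in> Simp C (Suc (Suc n))"
    and f: "\<forall>i \<le> Suc (Suc n). i \<noteq> Suc k \<longrightarrow> face C (Suc n) i \<Theta> = xs i" by blast
  define y where "y = face C (Suc n) (Suc k) \<Theta>"
  have kn: "k + 3 \<le> Suc (Suc n)" using k n2 by simp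
  have fk: "face C (Suc n) k \<Theta> = t0" "face C (Suc n) (Suc (Suc k)) \<Theta> = t2" "face C (Suc n) (k + 3) \<Theta> = t3"
    using f kn unfolding xs_def by auto
  have y0: "face C n k y = e23"
    using face_face[OF th, of k "Suc k"] fk t0 unfolding y_def by simp
  have y1: "face C n (Suc k) y = e03"
    using face_face[OF th, of "Suc k" "Suc (Suc k)"] fk t2 unfolding y_def by simp
  have y2: "face C n (Suc (Suc k)) y = e02"
    using face_face[OF th, of "Suc k" "k + 3"] fk t3 unfolding y_def by (simp add: numeral_3_eq_3)
  have yo: "\<forall>j \<le> Suc n. j \<noteq> k \<longrightarrow> j \<noteq> Suc k \<longrightarrow> j \<noteq> Suc (Suc k) \<longrightarrow> face C n j y = cst C n c"
  proof (intro allI impI)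
    fix j assume j: "j \<le> Suc n" "j \<noteq> k" "j \<noteq> Suc k" "j \<noteq> Suc (Suc k)"
    show "face C n j y = cst C n c" unfolding y_def
    proof (rule win_face[OF th, where k = k and r = 3])
      show "\<forall>i\<le>Suc (Suc n). (i < k \<or> k + 3 < i) \<longrightarrow> face C (Suc n) i \<Theta> = cst C (Suc n) c"
        using f unfolding xs_def by auto
    qed (use j in auto)
  qed
  show ?thesis unfolding Tri_def
    using face_simp[OF th] y0 y1 y2 yo unfolding y_def by blast
qed


lemma tri_linv:
  assumes x: "sph x"
  shows "\<exists>y. sph y \<and> Tri (n - 1) y (cst C n c) x"
proof -
  obtain M where M: "n = Suc M" using nM by blast
  have M1: "0 < M" using M n2 by simp
  define xs where "xs = (\<lambda>i. if i = Suc (Suc M) then x else cst C (Suc M) c)"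
  have xS: "x \<in> Simp C (Suc M)" "allcst M x"
    using x M unfolding sph_def by auto
  have "\<exists>y \<in> Simp C (Suc (Suc M)). \<forall>i \<le> Suc (Suc M). i \<noteq> M \<longrightarrow> face C (Suc M) i y = xs i"
  proof (rule horn[where k = M and r = 2])
    show "0 < M" by (rule M1)
    show "M < Suc (Suc M)" by simp
    show "\<forall>i\<le>Suc (Suc M). i \<noteq> M \<longrightarrow> xs i \<in> Simp C (Suc M)"
      using xS cst_simp by (auto simp: xs_def)
    show "\<forall>i\<le>Suc (Suc M). i \<noteq> M \<longrightarrow> (i < M \<or> M + 2 < i) \<longrightarrow> xs i = cst C (Suc M) c"
      by (auto simp: xs_def)
    show "\<forall>i\<le>Suc (Suc M). i \<noteq> M \<longrightarrow> M \<le> i \<longrightarrow> i \<le> M + 2 \<longrightarrow>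
        (\<forall>j\<le>Suc M. (j < M \<or> M + 2 \<le> j) \<longrightarrow> face C M j (xs i) = cst C M c)"
      using xS unfolding xs_def allcst_def by (auto simp: face_cst)
    show "\<forall>i j. i < j \<longrightarrow> j \<le> Suc (Suc M) \<longrightarrow> i \<noteq> M \<longrightarrow> j \<noteq> M \<longrightarrow> M \<le> i \<longrightarrow> j \<le> M + 2 \<longrightarrow>
        face C M i (xs j) = face C M (j - 1) (xs i)"
    proof (intro allI impI)
      fix i j assume a: "i < j" "j \<le> Suc (Suc M)" "i \<noteq> M" "j \<noteq> M" "M \<le> i" "j \<le> M + 2"
      then have "i = Suc M" "j = Suc (Suc M)" by auto
      then show "face C M i (xs j) = face C M (j - 1) (xs i)"
        using xS a unfolding xs_def allcst_def by (auto simp: face_cst)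
    qed
  qed
  then obtain \<theta> where th: "\<theta> \<in> Simp C (Suc (Suc M))"
    and f: "\<forall>i \<le> Suc (Suc M). i \<noteq> M \<longrightarrow> face C (Suc M) i \<theta> = xs i" by blast
  define y where "y = face C (Suc M) M \<theta>"
  have "allcst M y" unfolding y_def
  proof (rule missing_face[OF th])
    show "M \<le> Suc (Suc M)" by simp
    show "\<forall>i\<le>Suc (Suc M). i \<noteq> M \<longrightarrow> allcst M (face C (Suc M) i \<theta>)"
      using f xS allcst_cst unfolding xs_def by auto
  qed
  moreover have "y \<in> Simp C (Suc M)" unfolding y_def by (rule face_simp[OF th])
  ultimately have "sph y" using M unfolding sph_def by simp
  moreover have "Tri (n - 1) y (cst C n c) x"
  proof -
    have thn: "\<theta> \<in> Simp C (Suc n)" using th M by simp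
    have fn: "\<forall>i \<le> Suc n. i \<noteq> M \<longrightarrow> face C n i \<theta> = xs i" using f M by simp
    have yn: "y = face C n M \<theta>" using y_def M by simp
    show ?thesis unfolding Tri_def
      apply (rule bexI[OF _ thn])
      using fn M unfolding xs_def yn by auto
  qed
  ultimately show ?thesis by blast
qed

lemma oqc_k: "k \<le> n - 1 \<Longrightarrow> oqc {x. sph x} (Tri k) (cst C n c)"
  apply unfold_locales
  subgoal using sph_cst by simp
  subgoal using tri_s0 by simp
  subgoal using tri_s1 by simp
  subgoal using tri_comp by blast
  subgoal by (rule tri_h2)
  subgoal by (rule tri_h1)
  done

definition P :: "nat \<Rightarrow> 'a \<Rightarrow> 'a \<Rightarrow> bool" where
  "P k f g \<longleftrightarrow> (\<exists>\<psi> \<in> Simp C (Suc n). face C n k \<psi> = f \<and> face C n (Suc k) \<psi> = g \<and>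
      (\<forall>j \<le> Suc n. j \<noteq> k \<longrightarrow> j \<noteq> Suc k \<longrightarrow> face C n j \<psi> = cst C n c))"

definition E :: "'a \<Rightarrow> 'a \<Rightarrow> bool" where
  "E f g \<longleftrightarrow> sph f \<and> sph g \<and> Tri (n - 1) f g (cst C n c)"

lemma P_Tri1: assumes k: "k \<le> n - 1" shows "P k f g \<longleftrightarrow> Tri k f g (cst C n c)"
proof
  assume "P k f g"
  then obtain \<psi> where p: "\<psi> \<in> Simp C (Suc n)" "face C n k \<psi> = f" "face C n (Suc k) \<psi> = g"
    "\<forall>j \<le> Suc n. j \<noteq> k \<longrightarrow> j \<noteq> Suc k \<longrightarrow> face C n j \<psi> = cst C n c"
    unfolding P_def by blast
  have "face C n (Suc (Suc k)) \<psi> = cst C n c" using p(4)[rule_format, of "Suc (Suc k)"] k n2 by simp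
  then show "Tri k f g (cst C n c)" unfolding Tri_def
    using p by (intro bexI[OF _ p(1)]) auto
next
  assume "Tri k f g (cst C n c)"
  then obtain \<psi> where p: "\<psi> \<in> Simp C (Suc n)" "face C n k \<psi> = f" "face C n (Suc k) \<psi> = g"
     "face C n (Suc (Suc k)) \<psi> = cst C n c"
    "\<forall>j \<le> Suc n. j \<noteq> k \<longrightarrow> j \<noteq> Suc k \<longrightarrow> j \<noteq> Suc (Suc k) \<longrightarrow> face C n j \<psi> = cst C n c"
    unfolding Tri_def by blast
  have "\<forall>j \<le> Suc n. j \<noteq> k \<longrightarrow> j \<noteq> Suc k \<longrightarrow> face C n j \<psi> = cst C n c"
  proof (intro allI impI)
    fix j assume "j \<le> Suc n" "j \<noteq> k" "j \<noteq> Suc k"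
    then show "face C n j \<psi> = cst C n c" using p(4) p(5)[rule_format, of j] by (cases "j = Suc (Suc k)") auto
  qed
  then show "P k f g" unfolding P_def using p by blast
qed

lemma P_Tri2: assumes k: "k \<le> n - 1" shows "P (Suc k) f g \<longleftrightarrow> Tri k (cst C n c) f g"
proof
  assume "P (Suc k) f g"
  then obtain \<psi> where p: "\<psi> \<in> Simp C (Suc n)" "face C n (Suc k) \<psi> = f" "face C n (Suc (Suc k)) \<psi> = g"
    "\<forall>j \<le> Suc n. j \<noteq> Suc k \<longrightarrow> j \<noteq> Suc (Suc k) \<longrightarrow> face C n j \<psi> = cst C n c"
    unfolding P_def by blast
  then show "Tri k (cst C n c) f g" unfolding Tri_def
    using k by (intro bexI[OF _ p(1)]) auto
next
  assume "Tri k (cst C n c) f g"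
  then obtain \<psi> where p: "\<psi> \<in> Simp C (Suc n)" "face C n k \<psi> = cst C n c" "face C n (Suc k) \<psi> = f"
     "face C n (Suc (Suc k)) \<psi> = g"
    "\<forall>j \<le> Suc n. j \<noteq> k \<longrightarrow> j \<noteq> Suc k \<longrightarrow> j \<noteq> Suc (Suc k) \<longrightarrow> face C n j \<psi> = cst C n c"
    unfolding Tri_def by blast
  have "\<forall>j \<le> Suc n. j \<noteq> Suc k \<longrightarrow> j \<noteq> Suc (Suc k) \<longrightarrow> face C n j \<psi> = cst C n c"
  proof (intro allI impI)
    fix j assume "j \<le> Suc n" "j \<noteq> Suc k" "j \<noteq> Suc (Suc k)"
    then show "face C n j \<psi> = cst C n c" using p(2) p(5)[rule_format, of j] by (cases "j = k") auto
  qed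
  then show "P (Suc k) f g" unfolding P_def using p by blast
qed

end

lemma Ce_simps[simp]: "Simp (Ce C) = Simp C" "Op (Ce C) = Op C"
  by (simp_all add: Ce_def)

lemma face_Ce[simp]: "face (Ce C) = face C"
  by (simp add: face_def fun_eq_iff)

lemma cst_Ce[simp]: "cst (Ce C) = cst C"
  by (simp add: cst_def fun_eq_iff)

lemma delta_face_boundary: "j \<le> Suc N \<Longrightarrow> delta_face N j \<in> boundary (Suc N) N"
  unfolding boundary_def using delta_face_ops[of N j]
  by (auto simp: delta_face_def image_iff subset_iff intro!: exI[of _ j])

lemma boundary_miss: assumes "\<alpha> \<in> boundary N m" shows "\<exists>v \<le> N. \<forall>i \<le> m. \<alpha> i \<noteq> v"
proof -
  obtain t where "t \<in> {0..N}" "t \<notin> \<alpha> ` {0..m}" using assms unfolding boundary_def by blast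
  then show ?thesis by (intro exI[of _ t]) auto
qed

context qcat
begin

lemma spherical_eq: "spherical (Ce C) n c = {x. sph x}"
proof -
  obtain M where M: "n = Suc M" using nM by blast
  have "a \<in> spherical (Ce C) (Suc M) c \<longleftrightarrow> sph a" for a
  proof
    assume a: "a \<in> spherical (Ce C) (Suc M) c"
    then have aS: "a \<in> Simp C (Suc M)" unfolding spherical_def by simp
    have "face C M j a = cst C M c" if "j \<le> Suc M" for j
      using a delta_face_boundary[OF that] unfolding spherical_def face_def by auto
    then show "sph a" using aS M unfolding sph_def allcst_def by simp
  next
    assume "sph a"
    then have aS: "a \<in> Simp C (Suc M)" and ac: "allcst M a" using M unfolding sph_def by auto
    have "Op C m (Suc M) \<alpha> a = cst C m c" if bd: "\<alpha> \<in> boundary (Suc M) m" for m \<alpha>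
    proof -
      obtain v where v: "v \<le> Suc M" "\<forall>i \<le> m. \<alpha> i \<noteq> v" using boundary_miss[OF bd] by blast
      show ?thesis
        using lemF[of \<alpha> m M v a] bd v aS ac unfolding boundary_def allcst_def by auto
    qed
    then show "a \<in> spherical (Ce C) (Suc M) c" unfolding spherical_def using aS by auto
  qed
  then show ?thesis using M by auto
qed

lemma sph_bdry: "sph a \<Longrightarrow> \<alpha> \<in> boundary n m \<Longrightarrow> Op C m n \<alpha> a = cst C m c"
  using spherical_eq unfolding spherical_def by auto

lemma P_swap: assumes k: "k \<le> n - 1" and f: "sph f" and g: "sph g"
  shows "P (Suc k) f g \<longleftrightarrow> P k g f"
proof -
  interpret Q: oqc "{x. sph x}" "Tri k" "cst C n c" by (rule oqc_k[OF k])
  show ?thesis using P_Tri1[OF k] P_Tri2[OF k] Q.lpat[of f g] f g by simp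
qed

lemma P_sym: assumes k: "k \<le> n - 1" and f: "sph f" and g: "sph g" and p: "P k f g"
  shows "P k g f"
proof -
  interpret Q: oqc "{x. sph x}" "Tri k" "cst C n c" by (rule oqc_k[OF k])
  show ?thesis using P_Tri1[OF k] Q.rsym[of f g] f g p by simp
qed

lemma E_P: "E f g \<longleftrightarrow> sph f \<and> sph g \<and> P (n - 1) f g"
  unfolding E_def using P_Tri1[of "n - 1"] by auto

lemma P_E_aux: "d \<le> n - 1 \<Longrightarrow> sph f \<Longrightarrow> sph g \<Longrightarrow> P (n - 1 - d) f g \<longleftrightarrow> P (n - 1) f g"
proof (induction d arbitrary: f g)
  case 0
  then show ?case by simp
next
  case (Suc d)
  have e: "Suc (n - 1 - Suc d) = n - 1 - d" using Suc.prems by simp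
  have "P (n - 1 - Suc d) f g \<longleftrightarrow> P (Suc (n - 1 - Suc d)) g f"
    using P_swap[of "n - 1 - Suc d" g f] Suc.prems by simp
  also have "\<dots> \<longleftrightarrow> P (n - 1) g f" unfolding e using Suc by simp
  also have "\<dots> \<longleftrightarrow> P (n - 1) f g" using P_sym[of "n - 1"] Suc.prems by blast
  finally show ?case .
qed

lemma P_E: assumes "k \<le> n" "sph f" "sph g" shows "P k f g \<longleftrightarrow> E f g"
proof (cases "k = n")
  case True
  have "P n f g \<longleftrightarrow> P (Suc (n - 1)) f g" using nM by simp
  also have "\<dots> \<longleftrightarrow> P (n - 1) g f" using P_swap[of "n - 1" f g] assms by simp
  also have "\<dots> \<longleftrightarrow> P (n - 1) f g" using P_sym[of "n - 1"] assms by blast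
  finally show ?thesis using True E_P assms by simp
next
  case False
  then have "k = n - 1 - (n - 1 - k)" "n - 1 - k \<le> n - 1" using assms by auto
  then show ?thesis using P_E_aux[of "n - 1 - k" f g] assms E_P by metis
qed

lemma E_refl: "sph f \<Longrightarrow> E f f"
  using E_def tri_s0[of "n - 1" f] by simp

lemma E_sym: "E f g \<Longrightarrow> E g f"
proof -
  interpret Q: oqc "{x. sph x}" "Tri (n - 1)" "cst C n c" by (rule oqc_k) simp
  show "E f g \<Longrightarrow> E g f" unfolding E_def using Q.rsym by auto
qed

lemma E_trans: "E f g \<Longrightarrow> E g h \<Longrightarrow> E f h"
proof -
  interpret Q: oqc "{x. sph x}" "Tri (n - 1)" "cst C n c" by (rule oqc_k) simp
  show "E f g \<Longrightarrow> E g h \<Longrightarrow> E f h" unfolding E_def using Q.rtrans by auto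
qed

end

definition gg :: "nat \<Rightarrow> nat \<Rightarrow> nat \<Rightarrow> nat" where
  "gg N k = (\<lambda>i. if i \<le> k then 0 else if i \<le> Suc N then 1 else 0)"
definition hh :: "nat \<Rightarrow> nat \<Rightarrow> nat \<Rightarrow> nat" where
  "hh N k = (\<lambda>i. if i \<le> N then (if i < k then 0 else 1) else 0)"

lemma cmp_ops: "\<alpha> \<in> ops m N \<Longrightarrow> \<beta> \<in> ops k m \<Longrightarrow> cmp k \<alpha> \<beta> \<in> ops k N"
  unfolding ops_def cmp_def by auto

lemma gg_ops: "gg N k \<in> ops (Suc N) 1" unfolding ops_def gg_def by auto
lemma hh_ops: "hh N k \<in> ops N 1" unfolding ops_def hh_def by auto
lemma idop_ops: "idop N \<in> ops N N" unfolding ops_def idop_def by auto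

lemma gg_face1: "cmp N (gg N k) (delta_face N k) = hh N k"
  unfolding fun_eq_iff cmp_def gg_def hh_def delta_face_def by auto
lemma gg_face2: "cmp N (gg N k) (delta_face N (Suc k)) = hh N (Suc k)"
  unfolding fun_eq_iff cmp_def gg_def hh_def delta_face_def by auto
lemma idop_face: "cmp N (idop (Suc N)) (delta_face N j) = delta_face N j"
  unfolding fun_eq_iff cmp_def idop_def delta_face_def by auto
lemma hh0: "hh N 0 = (\<lambda>i. if i \<le> N then 1 else 0)"
  unfolding fun_eq_iff hh_def by auto
lemma hhS: "hh N (Suc N) = (\<lambda>i. 0)"
  unfolding fun_eq_iff hh_def by auto


lemma miss_boundary: assumes "\<alpha> \<in> ops m N" "v \<le> N" "\<forall>i\<le>m. \<alpha> i \<noteq> v"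
  shows "\<alpha> \<in> boundary N m"
proof -
  have "v \<notin> \<alpha> ` {0..m}" using assms(3) by auto
  then show ?thesis unfolding boundary_def using assms(1,2) by auto
qed

context qcat
begin

lemma face_n1: "face C (n - 1) j x = Op C (n - 1) n (delta_face (n - 1) j) x"
  unfolding face_def using nM by metis

lemma df_ops_n1: "delta_face (n - 1) j \<in> ops (n - 1) n"
  using delta_face_ops[of "n - 1" j] nM by metis

lemma df_bd_n1: "j \<le> n \<Longrightarrow> delta_face (n - 1) j \<in> boundary n (n - 1)"
  using delta_face_boundary[of j "n - 1"] nM by metis

lemma htpy_E:
  assumes a: "sph a" and b: "sph b" and h: "htpy (Ce C) n a b"
  shows "E a b"
proof -
  obtain H where sm: "smap (sprod (Delta_min n) (Delta_t 1)) (Ce C) H"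
    and h1: "\<forall>m. \<forall>\<alpha> \<in> ops m n. H m (\<alpha>, (\<lambda>i. if i \<le> m then 1 else 0)) = Op C m n \<alpha> b"
    and hb: "\<forall>m. \<forall>\<alpha> \<in> boundary n m. \<forall>\<gamma> \<in> ops m 1. H m (\<alpha>, \<gamma>) = Op C m n \<alpha> a"
    and h0: "\<forall>m. \<forall>\<alpha> \<in> ops m n. H m (\<alpha>, (\<lambda>i. 0)) = Op C m n \<alpha> a"
    using h unfolding htpy_def by auto
  have HS: "H m (\<alpha>, \<gamma>) \<in> Simp C m" if "\<alpha> \<in> ops m n" "\<gamma> \<in> ops m 1" for m \<alpha> \<gamma>
    using sm that unfolding smap_def sprod_def Delta_min_def Delta_t_def by auto
  have HO: "H m (cmp m \<alpha> \<beta>, cmp m \<gamma> \<beta>) = Op C m N \<beta> (H N (\<alpha>, \<gamma>))"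
    if "\<beta> \<in> ops m N" "\<alpha> \<in> ops N n" "\<gamma> \<in> ops N 1" for m N \<alpha> \<beta> \<gamma>
  proof -
    have "\<forall>m n' \<beta> p. \<beta> \<in> ops m n' \<longrightarrow> p \<in> ops n' n \<times> ops n' 1 \<longrightarrow>
       H m (cmp m (fst p) \<beta>, cmp m (snd p) \<beta>) = Op C m n' \<beta> (H n' p)"
      using sm unfolding smap_def sprod_def Delta_min_def Delta_t_def by simp
    then show ?thesis using that by force
  qed
  define y where "y k = H n (idop n, hh n k)" for k
  have ysph: "sph (y k)" for k
  proof -
    have "y k \<in> Simp C n" unfolding y_def by (rule HS[OF idop_ops hh_ops])
    moreover have "face C (n - 1) j (y k) = cst C (n - 1) c" if j: "j \<le> n" for j
    proof -
      have "face C (n - 1) j (y k) = H (n - 1) (cmp (n - 1) (idop n) (delta_face (n - 1) j),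
            cmp (n - 1) (hh n k) (delta_face (n - 1) j))"
        unfolding face_n1 y_def by (rule HO[OF df_ops_n1 idop_ops hh_ops, symmetric])
      also have "cmp (n - 1) (idop n) (delta_face (n - 1) j) = delta_face (n - 1) j"
        using idop_face[of "n - 1" j] nM by metis
      also have "H (n - 1) (delta_face (n - 1) j, cmp (n - 1) (hh n k) (delta_face (n - 1) j))
          = Op C (n - 1) n (delta_face (n - 1) j) a"
        using hb df_bd_n1[OF j] cmp_ops[OF hh_ops df_ops_n1] by blast
      also have "\<dots> = cst C (n - 1) c" using sph_face[OF a j] face_n1 by simp
      finally show ?thesis .
    qed
    ultimately show ?thesis unfolding sph_def allcst_def using nM by (metis)
  qed
  have Pk: "P k (y k) (y (Suc k))" if k: "k \<le> n" for k
  proof -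
    define \<psi> where "\<psi> = H (Suc n) (sig n k, gg n k)"
    have psS: "\<psi> \<in> Simp C (Suc n)" unfolding \<psi>_def by (rule HS[OF sig_ops[OF k] gg_ops])
    have fps: "face C n j \<psi> = H n (cmp n (sig n k) (delta_face n j), cmp n (gg n k) (delta_face n j))" for j
      unfolding face_def \<psi>_def by (rule HO[OF delta_face_ops sig_ops[OF k] gg_ops, symmetric])
    have f1: "face C n k \<psi> = y k" unfolding fps y_def
      using sig_face_id[of k k n] gg_face1 by simp
    have f2: "face C n (Suc k) \<psi> = y (Suc k)" unfolding fps y_def
      using sig_face_id[of "Suc k" k n] gg_face2 by simp
    have f3: "face C n j \<psi> = cst C n c" if j: "j \<le> Suc n" "j \<noteq> k" "j \<noteq> Suc k" for j
    proof -
      have bd: "cmp n (sig n k) (delta_face n j) \<in> boundary n n"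
      proof -
        have v: "(if j < k then j else j - 1) \<le> n" using j k by auto
        show ?thesis using miss_boundary[OF sig_face_ops[OF k, of j] v] sig_face_miss[OF k j(1) j(2) j(3)]
          by blast
      qed
      have "face C n j \<psi> = Op C n n (cmp n (sig n k) (delta_face n j)) a"
        unfolding fps using hb bd cmp_ops[OF gg_ops delta_face_ops] by blast
      also have "\<dots> = cst C n c" by (rule sph_bdry[OF a bd])
      finally show ?thesis .
    qed
    show ?thesis unfolding P_def using psS f1 f2 f3 by blast
  qed
  have Ek: "E (y k) (y (Suc k))" if "k \<le> n" for k
    using Pk[OF that] P_E[OF that ysph ysph] by simp
  have chain: "E (y 0) (y k)" if "k \<le> Suc n" for k
    using that
  proof (induction k)
    case 0 then show ?case using E_refl ysph by simp
  next
    case (Suc k) then show ?case using E_trans Ek by simp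
  qed
  have y0: "y 0 = b" unfolding y_def hh0 using h1 idop_ops op_id sph_simp[OF b] by simp
  have yn: "y (Suc n) = a" unfolding y_def hhS using h0 idop_ops op_id sph_simp[OF a] by simp
  show ?thesis using chain[of "Suc n"] y0 yn E_sym by simp
qed

end

lemma ops_le: "\<alpha> \<in> ops m N \<Longrightarrow> i \<le> m \<Longrightarrow> \<alpha> i \<le> N" unfolding ops_def by auto
lemma ops_out: "\<alpha> \<in> ops m N \<Longrightarrow> \<not> i \<le> m \<Longrightarrow> \<alpha> i = 0" unfolding ops_def by auto

definition phi :: "nat \<Rightarrow> nat \<Rightarrow> (nat \<Rightarrow> nat) \<Rightarrow> (nat \<Rightarrow> nat) \<Rightarrow> nat \<Rightarrow> nat" where
  "phi N m \<alpha> \<gamma> = (\<lambda>i. if i \<le> m then (if \<gamma> i = 0 then \<alpha> i else (if \<alpha> i < N then \<alpha> i else Suc N)) else 0)"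

lemma phi_ops: "\<alpha> \<in> ops m N \<Longrightarrow> \<gamma> \<in> ops m 1 \<Longrightarrow> phi N m \<alpha> \<gamma> \<in> ops m (Suc N)"
proof -
  assume a: "\<alpha> \<in> ops m N" and g: "\<gamma> \<in> ops m 1"
  have a1: "\<And>i. i \<le> m \<Longrightarrow> \<alpha> i \<le> N" and a2: "\<And>i j. i \<le> j \<Longrightarrow> j \<le> m \<Longrightarrow> \<alpha> i \<le> \<alpha> j"
    and g2: "\<And>i j. i \<le> j \<Longrightarrow> j \<le> m \<Longrightarrow> \<gamma> i \<le> \<gamma> j" using a g unfolding ops_def by auto
  have m: "phi N m \<alpha> \<gamma> i \<le> phi N m \<alpha> \<gamma> j" if ij: "i \<le> j" "j \<le> m" for i j
  proof -
    have "\<alpha> i \<le> \<alpha> j" "\<gamma> i \<le> \<gamma> j" using a2[OF ij] g2[OF ij] by auto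
    moreover have "\<alpha> i \<le> N" using a1 ij by simp
    ultimately show ?thesis using ij unfolding phi_def by auto
  qed
  have b: "phi N m \<alpha> \<gamma> i \<le> Suc N" if "i \<le> m" for i
    using a1[OF that] unfolding phi_def by auto
  have o: "phi N m \<alpha> \<gamma> i = 0" if "m < i" for i using that by (simp add: phi_def)
  show ?thesis unfolding ops_def using m b o by blast
qed

lemma phi_cmp: "\<beta> \<in> ops m K \<Longrightarrow> phi N m (cmp m \<alpha> \<beta>) (cmp m \<gamma> \<beta>) = cmp m (phi N K \<alpha> \<gamma>) \<beta>"
  unfolding fun_eq_iff by (auto simp: phi_def cmp_def dest: ops_le)

lemma phi_0: "\<alpha> \<in> ops m N \<Longrightarrow> phi N m \<alpha> (\<lambda>i. 0) = \<alpha>"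
  unfolding fun_eq_iff by (auto simp: phi_def ops_out)

lemma df_top: "\<alpha> \<in> ops m N \<Longrightarrow> cmp m (delta_face N (Suc N)) \<alpha> = \<alpha>"
  unfolding fun_eq_iff by (auto simp: cmp_def delta_face_def ops_out dest: ops_le)

lemma phi_1: "\<alpha> \<in> ops m N \<Longrightarrow> phi N m \<alpha> (\<lambda>i. if i \<le> m then 1 else 0) = cmp m (delta_face N N) \<alpha>"
  unfolding fun_eq_iff by (auto simp: phi_def cmp_def delta_face_def dest: ops_le)

lemma phi_lt: assumes a: "\<alpha> \<in> ops m N" and b: "\<forall>i\<le>m. \<alpha> i \<noteq> N" shows "phi N m \<alpha> \<gamma> = \<alpha>"
  unfolding fun_eq_iff phi_def
proof (intro allI)
  fix i show "(if i \<le> m then if \<gamma> i = 0 then \<alpha> i else if \<alpha> i < N then \<alpha> i else Suc N else 0) = \<alpha> i"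
    using ops_le[OF a, of i] ops_out[OF a, of i] b by (cases "i \<le> m") auto
qed

lemma phi_miss: "\<forall>i\<le>m. \<alpha> i \<noteq> v \<Longrightarrow> v < N \<Longrightarrow> \<forall>i\<le>m. phi N m \<alpha> \<gamma> i \<noteq> v"
  unfolding phi_def by auto

lemma phi_thin: assumes a: "\<alpha> \<in> ops 1 N" "\<alpha> 0 = \<alpha> 1" "2 \<le> N"
  shows "\<exists>v<N. \<forall>i\<le>1. phi N 1 \<alpha> \<gamma> i \<noteq> v"
proof -
  have i: "\<alpha> i = \<alpha> 0" if "i \<le> 1" for i
  proof -
    have "i = 0 \<or> i = 1" using that by linarith
    then show ?thesis using a(2) by metis
  qed
  show ?thesis
  proof (cases "\<alpha> 0 < N")
    case True
    have "phi N 1 \<alpha> \<gamma> i = \<alpha> 0" if "i \<le> 1" for i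
      using i[OF that] True that unfolding phi_def by simp
    moreover have "(if \<alpha> 0 = 0 then 1 else 0) < N" using a(3) by simp
    moreover have "\<alpha> 0 \<noteq> (if \<alpha> 0 = 0 then 1 else 0)" by simp
    ultimately show ?thesis by metis
  next
    case False
    have "phi N 1 \<alpha> \<gamma> i \<noteq> 0" if "i \<le> 1" for i
      using i[OF that] False that a(3) unfolding phi_def by simp
    moreover have "(0::nat) < N" using a(3) by simp
    ultimately show ?thesis by metis
  qed
qed

lemma degen_std_0: "degen_std N 0 = {}"
  unfolding degen_std_def degenerate_def by auto

lemma degen_std_1: assumes "\<alpha> \<in> degen_std N 1"
  shows "\<exists>y \<in> ops 0 N. \<exists>\<beta> \<in> ops 1 0. \<alpha> = cmp 1 y \<beta>"
  using assms unfolding degen_std_def degenerate_def delta_sset_def by auto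

lemma degen_std_1': assumes "\<alpha> \<in> degen_std N 1" shows "\<alpha> 0 = \<alpha> 1"
proof -
  obtain y \<beta> where y: "y \<in> ops 0 N" "\<beta> \<in> ops 1 0" "\<alpha> = cmp 1 y \<beta>" using degen_std_1[OF assms] by blast
  have "\<beta> 0 = 0" "\<beta> 1 = 0" using ops_le[OF y(2), of 0] ops_le[OF y(2), of 1] by auto
  then show ?thesis using y(3) by (simp add: cmp_def)
qed


context qcat
begin

lemma cst_degen: "degenerate C 1 (cst C 1 c)"
  unfolding degenerate_def cst_def using ops_zero c0 by blast

lemma P_htpy:
  assumes a: "sph a" and b: "sph b" and p: "P n b a"
  shows "htpy (Ce C) n a b"
proof -
  obtain \<psi> where ps: "\<psi> \<in> Simp C (Suc n)" "face C n n \<psi> = b" "face C n (Suc n) \<psi> = a"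
    and po: "\<forall>j \<le> Suc n. j \<noteq> n \<longrightarrow> j \<noteq> Suc n \<longrightarrow> face C n j \<psi> = cst C n c"
    using p unfolding P_def by blast
  define H where "H m p = Op C m (Suc n) (phi n m (fst p) (snd p)) \<psi>" for m p
  have HS: "H m (\<alpha>, \<gamma>) \<in> Simp C m" if "\<alpha> \<in> ops m n" "\<gamma> \<in> ops m 1" for m \<alpha> \<gamma>
    unfolding H_def by (simp add: op_closed[OF phi_ops[OF that] ps(1)])
  have H0: "H m (\<alpha>, \<lambda>i. 0) = Op C m n \<alpha> a" if al: "\<alpha> \<in> ops m n" for m \<alpha>
  proof -
    have "Op C m n \<alpha> a = Op C m (Suc n) (cmp m (delta_face n (Suc n)) \<alpha>) \<psi>"
      unfolding ps(3)[symmetric] face_def by (rule op_comp[OF delta_face_ops al ps(1)])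
    then show ?thesis unfolding H_def using phi_0[OF al] df_top[OF al] by simp
  qed
  have H1: "H m (\<alpha>, \<lambda>i. if i \<le> m then 1 else 0) = Op C m n \<alpha> b" if al: "\<alpha> \<in> ops m n" for m \<alpha>
  proof -
    have "Op C m n \<alpha> b = Op C m (Suc n) (cmp m (delta_face n n) \<alpha>) \<psi>"
      unfolding ps(2)[symmetric] face_def by (rule op_comp[OF delta_face_ops al ps(1)])
    then show ?thesis unfolding H_def using phi_1[OF al] by simp
  qed
  have HB: "H m (\<alpha>, \<gamma>) = Op C m n \<alpha> a" if bd: "\<alpha> \<in> boundary n m" and g: "\<gamma> \<in> ops m 1" for m \<alpha> \<gamma>
  proof -
    have al: "\<alpha> \<in> ops m n" using bd unfolding boundary_def by simp
    obtain v where v: "v \<le> n" "\<forall>i \<le> m. \<alpha> i \<noteq> v" using boundary_miss[OF bd] by blast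
    show ?thesis
    proof (cases "v = n")
      case True
      then have "phi n m \<alpha> \<gamma> = phi n m \<alpha> (\<lambda>i. 0)" using phi_lt[OF al] v by simp
      then show ?thesis using H0[OF al] unfolding H_def by simp
    next
      case False
      then have vn: "v < n" using v by simp
      have "H m (\<alpha>, \<gamma>) = cst C m c" unfolding H_def
        using lemF[OF phi_ops[OF al g] _ phi_miss[OF v(2) vn] ps(1)] vn po by simp
      then show ?thesis using sph_bdry[OF a bd] by simp
    qed
  qed
  have sm: "smap (sprod (Delta_min n) (Delta_t 1)) (Ce C) H"
    unfolding smap_def
  proof (intro conjI allI impI)
    fix m q assume "q \<in> Simp (sprod (Delta_min n) (Delta_t 1)) m"
    then show "H m q \<in> Simp (Ce C) m"
      using HS[of "fst q" m "snd q"] by (simp add: sprod_def Delta_min_def Delta_t_def mem_Times_iff)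
  next
    fix m n' \<beta> q assume be: "\<beta> \<in> ops m n'" and q: "q \<in> Simp (sprod (Delta_min n) (Delta_t 1)) n'"
    have q1: "fst q \<in> ops n' n" "snd q \<in> ops n' 1" using q by (auto simp: sprod_def Delta_min_def Delta_t_def mem_Times_iff)
    have "H m (Op (sprod (Delta_min n) (Delta_t 1)) m n' \<beta> q) = Op C m (Suc n) (cmp m (phi n n' (fst q) (snd q)) \<beta>) \<psi>"
      unfolding H_def using phi_cmp[OF be] by (simp add: sprod_def Delta_min_def Delta_t_def)
    also have "\<dots> = Op C m n' \<beta> (H n' q)"
      unfolding H_def by (rule op_comp[OF phi_ops[OF q1] be ps(1), symmetric])
    finally show "H m (Op (sprod (Delta_min n) (Delta_t 1)) m n' \<beta> q) = Op (Ce C) m n' \<beta> (H n' q)" by simp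
  next
    fix m q assume q: "q \<in> Thin (sprod (Delta_min n) (Delta_t 1)) m"
    have q1: "fst q \<in> degen_std n m" "snd q \<in> degen_std 1 m \<union> (if m = 1 then {idop 1} else {})"
      using q by (auto simp: sprod_def Delta_min_def Delta_t_def mem_Times_iff)
    have q2: "fst q \<in> ops m n" "snd q \<in> ops m 1"
      using q1 idop_ops[of 1] by (auto simp: degen_std_def split: if_splits)
    have inS: "H m q \<in> Simp C m" using HS[OF q2] by simp
    show "H m q \<in> Thin (Ce C) m"
    proof (cases "2 \<le> m")
      case True then show ?thesis using inS by (simp add: Ce_def)
    next
      case False
      then have "m = 0 \<or> m = 1" by auto
      moreover have "m \<noteq> 0"
      proof
        assume "m = 0" then show False using q1(1) degen_std_0[of n] by simp
      qed
      ultimately have m1: "m = 1" by simp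
      have eq: "fst q 0 = fst q 1" using degen_std_1'[of "fst q" n] q1(1) m1 by simp
      have q2': "fst q \<in> ops 1 n" "snd q \<in> ops 1 1" using q2 m1 by auto
      obtain v where v: "v < n" "\<forall>i\<le>1. phi n 1 (fst q) (snd q) i \<noteq> v"
        using phi_thin[OF q2'(1) eq n2] by blast
      have "H 1 q = cst C 1 c" unfolding H_def
        using lemF[OF phi_ops[OF q2'] _ v(2) ps(1)] v(1) po by simp
      then show ?thesis using inS m1 cst_degen by (simp add: Ce_def)
    qed
  qed
  show ?thesis unfolding htpy_def
    using sm H0 H1 HB by (intro exI[of _ H]) simp
qed

end

context qcat
begin

definition Er :: "('a \<times> 'a) set" where "Er = {(u, v). E u v}"

lemma E_sph: "E u v \<Longrightarrow> sph u \<and> sph v" unfolding E_def by simp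

lemma equiv_Er: "equiv {x. sph x} Er"
  unfolding equiv_def refl_on_def sym_def trans_def Er_def
  using E_sph E_refl E_sym E_trans by blast

lemma tau_equiv_eq: "tau_equiv (Ce C) n c = Er"
proof -
  define R where "R = {(a, b). a \<in> spherical (Ce C) n c \<and> b \<in> spherical (Ce C) n c \<and> htpy (Ce C) n a b}"
  have R: "(a, b) \<in> R \<longleftrightarrow> sph a \<and> sph b \<and> htpy (Ce C) n a b" for a b
    unfolding R_def spherical_eq by simp
  have te: "tau_equiv (Ce C) n c = (R \<union> R\<inverse>)\<^sup>* \<inter> ({x. sph x} \<times> {x. sph x})"
    unfolding tau_equiv_def R_def spherical_eq Let_def by simp
  have 1: "u = v \<or> E u v" if "(u, v) \<in> (R \<union> R\<inverse>)\<^sup>*" for u v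
    using that
  proof (induction rule: rtrancl_induct)
    case base then show ?case by simp
  next
    case (step y z)
    have "E y z"
    proof (cases "(y, z) \<in> R")
      case True then show ?thesis using R htpy_E by blast
    next
      case False
      then have "(z, y) \<in> R" using step by auto
      then show ?thesis using R htpy_E E_sym by blast
    qed
    then show ?case using step E_trans by blast
  qed
  have 2: "(u, v) \<in> (R \<union> R\<inverse>)\<^sup>*" if "E u v" for u v
  proof -
    have s: "sph u" "sph v" using E_sph[OF that] by auto
    have "P n v u" using P_E[of n v u] s that E_sym by simp
    then have "htpy (Ce C) n u v" using P_htpy s by blast
    then have "(u, v) \<in> R" using R s by simp
    then show ?thesis by auto
  qed
  have key: "(u, v) \<in> (R \<union> R\<inverse>)\<^sup>* \<inter> ({x. sph x} \<times> {x. sph x}) \<longleftrightarrow> E u v" for u v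
    using 1[of u v] 2[of u v] E_sph[of u v] E_refl[of u] by blast
  have "(u, v) \<in> tau_equiv (Ce C) n c \<longleftrightarrow> (u, v) \<in> Er" for u v
    unfolding te Er_def mem_Collect_eq case_prod_conv by (rule key)
  then show ?thesis by (auto simp: set_eq_iff)
qed

lemma tri_mid_sph:
  assumes k: "k \<le> n - 1" and x: "sph x" and z: "sph z" and t: "Tri k x y z"
  shows "sph y"
proof -
  obtain M where M: "n = Suc M" using nM by blast
  obtain \<theta> where th: "\<theta> \<in> Simp C (Suc n)" "face C n k \<theta> = x" "face C n (Suc k) \<theta> = y"
      "face C n (Suc (Suc k)) \<theta> = z"
      "\<forall>j \<le> Suc n. j \<noteq> k \<longrightarrow> j \<noteq> Suc k \<longrightarrow> j \<noteq> Suc (Suc k) \<longrightarrow> face C n j \<theta> = cst C n c"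
    using t unfolding Tri_def by blast
  have th': "\<theta> \<in> Simp C (Suc (Suc M))" using th M by simp
  have "allcst M (face C (Suc M) (Suc k) \<theta>)"
  proof (rule missing_face[OF th'])
    show "Suc k \<le> Suc (Suc M)" using k M by simp
    show "\<forall>i\<le>Suc (Suc M). i \<noteq> Suc k \<longrightarrow> allcst M (face C (Suc M) i \<theta>)"
      using th M x z allcst_cst unfolding sph_def by (auto simp del: One_nat_def)
  qed
  moreover have "y \<in> Simp C n" using face_simp[of \<theta> n "Suc k"] th(1) th(3) by simp
  ultimately show ?thesis using th(3) M unfolding sph_def by simp
qed

lemma yon_smap:
  assumes th: "\<theta> \<in> Simp C (Suc n)"
  shows "smap (Delta_k n (Suc n)) (Ce C) (yon (Ce C) (Suc n) \<theta>)"
  unfolding smap_def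
proof (intro conjI allI impI)
  fix m a assume "a \<in> Simp (Delta_k n (Suc n)) m"
  then show "yon (Ce C) (Suc n) \<theta> m a \<in> Simp (Ce C) m"
    using op_closed th by (simp add: Delta_k_def yon_def)
next
  fix m n' \<alpha> a assume al: "\<alpha> \<in> ops m n'" and a: "a \<in> Simp (Delta_k n (Suc n)) n'"
  then show "yon (Ce C) (Suc n) \<theta> m (Op (Delta_k n (Suc n)) m n' \<alpha> a) =
       Op (Ce C) m n' \<alpha> (yon (Ce C) (Suc n) \<theta> n' a)"
    using op_comp[of a n' "Suc n" \<alpha> m \<theta>] th by (simp add: Delta_k_def yon_def)
next
  fix m a assume a: "a \<in> Thin (Delta_k n (Suc n)) m"
  then have a': "a \<in> degen_std (Suc n) m \<or>
      (a \<in> ops m (Suc n) \<and> {n - 1, n, n + 1} \<inter> {0..Suc n} \<subseteq> a ` {0..m})"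
    by (simp add: Delta_k_def)
  have aops: "a \<in> ops m (Suc n)" using a' by (auto simp: degen_std_def)
  have inS: "Op C m (Suc n) a \<theta> \<in> Simp C m" by (rule op_closed[OF aops th])
  show "yon (Ce C) (Suc n) \<theta> m a \<in> Thin (Ce C) m"
  proof (cases "2 \<le> m")
    case True then show ?thesis using inS by (simp add: Ce_def yon_def)
  next
    case False
    then have m01: "m = 0 \<or> m = 1" by auto
    have nc: "\<not> ({n - 1, n, n + 1} \<inter> {0..Suc n} \<subseteq> a ` {0..m})"
    proof
      assume sub: "{n - 1, n, n + 1} \<inter> {0..Suc n} \<subseteq> a ` {0..m}"
      have img: "a ` {0..m} \<subseteq> {a 0, a 1}" using m01 by (auto simp: le_Suc_eq)
      have "n - 1 \<in> {a 0, a 1}" "n \<in> {a 0, a 1}" "n + 1 \<in> {a 0, a 1}" using sub img by auto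
      then show False using n2 by auto
    qed
    then have dg: "a \<in> degen_std (Suc n) m" using a' by blast
    have m1: "m = 1" using m01 dg degen_std_0 by auto
    obtain y \<beta> where y: "y \<in> ops 0 (Suc n)" "\<beta> \<in> ops 1 0" "a = cmp 1 y \<beta>"
      using degen_std_1[of a "Suc n"] dg m1 by blast
    have "Op C 1 (Suc n) a \<theta> = Op C 1 0 \<beta> (Op C 0 (Suc n) y \<theta>)"
      using op_comp[OF y(1) y(2) th] y(3) by simp
    moreover have "Op C 0 (Suc n) y \<theta> \<in> Simp C 0" by (rule op_closed[OF y(1) th])
    ultimately have "degenerate C 1 (Op C 1 (Suc n) a \<theta>)"
      unfolding degenerate_def using y(2) by blast
    then show ?thesis using inS m1 by (simp add: Ce_def yon_def)
  qed
qed

lemma tau_mult_eq: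
  assumes a: "sph a" and b: "sph b" and p: "Tri (n - 1) a p b"
  shows "tau_mult (Ce C) n c (Er `` {a}) (Er `` {b}) = Er `` {p}"
proof -
  interpret Q: oqc "{x. sph x}" "Tri (n - 1)" "cst C n c" by (rule oqc_k) simp
  have ps: "sph p" using tri_mid_sph[OF _ a b p] by simp
  have nn: "Suc (n - 1) = n" "Suc (Suc (n - 1)) = Suc n" using n2 by auto
  let ?Pr = "\<lambda>Cl. \<exists>a' \<in> Er `` {a}. \<exists>b' \<in> Er `` {b}. \<exists>\<theta> \<in> Simp (Ce C) (Suc n).
      smap (Delta_k n (Suc n)) (Ce C) (yon (Ce C) (Suc n) \<theta>) \<and>
      face (Ce C) n (n - 1) \<theta> = a' \<and> face (Ce C) n (Suc n) \<theta> = b' \<and>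
      (\<forall>i \<le> Suc n. i \<notin> {n - 1, n, Suc n} \<longrightarrow> face (Ce C) n i \<theta> = cst (Ce C) n c) \<and>
      Cl = tau_equiv (Ce C) n c `` {face (Ce C) n n \<theta>}"
  have ex: "?Pr (Er `` {p})"
  proof -
    obtain \<theta> where th: "\<theta> \<in> Simp C (Suc n)" "face C n (n - 1) \<theta> = a" "face C n (Suc (n - 1)) \<theta> = p"
      "face C n (Suc (Suc (n - 1))) \<theta> = b"
      "\<forall>j \<le> Suc n. j \<noteq> n - 1 \<longrightarrow> j \<noteq> Suc (n - 1) \<longrightarrow> j \<noteq> Suc (Suc (n - 1)) \<longrightarrow> face C n j \<theta> = cst C n c"
      using p unfolding Tri_def by blast
    have "a \<in> Er `` {a}" "b \<in> Er `` {b}" using E_refl a b by (auto simp: Er_def)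
    then show ?thesis
      using th nn yon_smap[OF th(1)] by (intro bexI[of _ a] bexI[of _ b] bexI[of _ \<theta>]) (auto simp: tau_equiv_eq)
  qed
  have un: "Cl = Er `` {p}" if pr: "?Pr Cl" for Cl
  proof -
    obtain a' b' \<theta> where ab: "a' \<in> Er `` {a}" "b' \<in> Er `` {b}" and th0: "\<theta> \<in> Simp (Ce C) (Suc n)"
      "face (Ce C) n (n - 1) \<theta> = a'" "face (Ce C) n (Suc n) \<theta> = b'"
      "\<forall>i \<le> Suc n. i \<notin> {n - 1, n, Suc n} \<longrightarrow> face (Ce C) n i \<theta> = cst (Ce C) n c"
      and cl0: "Cl = tau_equiv (Ce C) n c `` {face (Ce C) n n \<theta>}"
      using pr by blast
    have th: "\<theta> \<in> Simp C (Suc n)"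
      "face C n (n - 1) \<theta> = a'" "face C n (Suc n) \<theta> = b'"
      "\<forall>i \<le> Suc n. i \<notin> {n - 1, n, Suc n} \<longrightarrow> face C n i \<theta> = cst C n c"
      using th0 by simp_all
    have cl: "Cl = Er `` {face C n n \<theta>}" using cl0 tau_equiv_eq by simp
    have Eaa: "E a a'" "E b b'" using ab by (auto simp: Er_def)
    have s': "sph a'" "sph b'" using Eaa E_sph by auto
    define p' where "p' = face C n n \<theta>"
    have t': "Tri (n - 1) a' p' b'" unfolding Tri_def p'_def
      using th nn by (intro bexI[OF _ th(1)]) auto
    have sp': "sph p'" using tri_mid_sph[OF _ s' t'] by simp
    have Ta: "Tri (n - 1) a' a (cst C n c)" using E_sym[OF Eaa(1)] unfolding E_def by simp
    have Tb: "Tri (n - 1) b' b (cst C n c)" using E_sym[OF Eaa(2)] unfolding E_def by simp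
    have t1: "Tri (n - 1) a p' b'" by (rule Q.cong_x[of a' a p' b']) (use s' a sp' t' Ta in simp_all)
    have t2: "Tri (n - 1) a p' b" by (rule Q.cong_z[of a p' b' b]) (use s' a b sp' Tb t1 in simp_all)
    have "Tri (n - 1) p p' (cst C n c)" by (rule Q.uniq[of a p p' b]) (use a b ps sp' p t2 in simp_all)
    then have "E p p'" unfolding E_def using ps sp' by simp
    then have "E p' p" by (rule E_sym)
    then have "Er `` {p'} = Er `` {p}"
      using equiv_class_eq_iff[OF equiv_Er, of p' p] by (simp add: Er_def)
    then show ?thesis using cl p'_def by simp
  qed
  show ?thesis unfolding tau_mult_def
    by (rule someI2[of ?Pr "Er `` {p}", OF ex un])
qed

end

context qcat
begin

lemma carrier_tau: "carrier (tau (Ce C) n c) = {x. sph x} // Er"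
  by (simp add: tau_def spherical_eq tau_equiv_eq)

lemma mult_tau: "mult (tau (Ce C) n c) = tau_mult (Ce C) n c"
  by (simp add: tau_def)

lemma one_tau: "one (tau (Ce C) n c) = Er `` {cst C n c}"
  by (simp add: tau_def tau_equiv_eq)

lemma cls: "X \<in> {x. sph x} // Er \<Longrightarrow> \<exists>a. sph a \<and> X = Er `` {a}"
  by (erule quotientE) auto

lemma cls_in: "sph a \<Longrightarrow> Er `` {a} \<in> {x. sph x} // Er"
  by (rule quotientI) simp

lemma tau_group: "group (tau (Ce C) n c)"
proof (rule groupI)
  interpret Q: oqc "{x. sph x}" "Tri (n - 1)" "cst C n c" by (rule oqc_k) simp
  fix X Y assume X: "X \<in> carrier (tau (Ce C) n c)" and Y: "Y \<in> carrier (tau (Ce C) n c)"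
  obtain a b where ab: "sph a" "X = Er `` {a}" "sph b" "Y = Er `` {b}"
    using cls X Y unfolding carrier_tau by metis
  obtain p where p: "sph p" "Tri (n - 1) a p b" using tri_comp[of "n - 1" a b] ab by auto
  show "X \<otimes>\<^bsub>tau (Ce C) n c\<^esub> Y \<in> carrier (tau (Ce C) n c)"
    unfolding mult_tau carrier_tau ab(2,4) tau_mult_eq[OF ab(1,3) p(2)] by (rule cls_in[OF p(1)])
next
  show "\<one>\<^bsub>tau (Ce C) n c\<^esub> \<in> carrier (tau (Ce C) n c)"
    unfolding one_tau carrier_tau by (rule cls_in[OF sph_cst])
next
  interpret Q: oqc "{x. sph x}" "Tri (n - 1)" "cst C n c" by (rule oqc_k) simp
  fix X Y Z assume X: "X \<in> carrier (tau (Ce C) n c)" and Y: "Y \<in> carrier (tau (Ce C) n c)"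
    and Z: "Z \<in> carrier (tau (Ce C) n c)"
  obtain x y z where xyz: "sph x" "X = Er `` {x}" "sph y" "Y = Er `` {y}" "sph z" "Z = Er `` {z}"
    using cls X Y Z unfolding carrier_tau by metis
  obtain r where r: "sph r" "Tri (n - 1) x r y" using tri_comp[of "n - 1" x y] xyz by auto
  obtain p where p: "sph p" "Tri (n - 1) y p z" using tri_comp[of "n - 1" y z] xyz by auto
  obtain q where q: "sph q" "Tri (n - 1) x q p" using tri_comp[of "n - 1" x p] xyz p by auto
  have rq: "Tri (n - 1) r q z" by (rule Q.assoc[of x y z p q r]) (use xyz p q r in simp_all)
  show "X \<otimes>\<^bsub>tau (Ce C) n c\<^esub> Y \<otimes>\<^bsub>tau (Ce C) n c\<^esub> Z =
        X \<otimes>\<^bsub>tau (Ce C) n c\<^esub> (Y \<otimes>\<^bsub>tau (Ce C) n c\<^esub> Z)"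
    unfolding mult_tau xyz(2,4,6) tau_mult_eq[OF xyz(1,3) r(2)] tau_mult_eq[OF xyz(3,5) p(2)]
      tau_mult_eq[OF r(1) xyz(5) rq] tau_mult_eq[OF xyz(1) p(1) q(2)] ..
next
  fix X assume X: "X \<in> carrier (tau (Ce C) n c)"
  obtain x where x: "sph x" "X = Er `` {x}" using cls X unfolding carrier_tau by metis
  show "\<one>\<^bsub>tau (Ce C) n c\<^esub> \<otimes>\<^bsub>tau (Ce C) n c\<^esub> X = X"
    unfolding mult_tau one_tau x(2) by (rule tau_mult_eq[OF sph_cst x(1) tri_s1[OF order_refl x(1)]])
next
  fix X assume X: "X \<in> carrier (tau (Ce C) n c)"
  obtain x where x: "sph x" "X = Er `` {x}" using cls X unfolding carrier_tau by metis
  obtain y where y: "sph y" "Tri (n - 1) y (cst C n c) x" using tri_linv[OF x(1)] by blast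
  have "Er `` {y} \<otimes>\<^bsub>tau (Ce C) n c\<^esub> X = \<one>\<^bsub>tau (Ce C) n c\<^esub>"
    unfolding mult_tau one_tau x(2) by (rule tau_mult_eq[OF y(1) x(1) y(2)])
  moreover have "Er `` {y} \<in> carrier (tau (Ce C) n c)" unfolding carrier_tau by (rule cls_in[OF y(1)])
  ultimately show "\<exists>Y\<in>carrier (tau (Ce C) n c). Y \<otimes>\<^bsub>tau (Ce C) n c\<^esub> X = \<one>\<^bsub>tau (Ce C) n c\<^esub>" by blast
qed

end

theorem mainTheorem7:
  fixes C :: "'a sset" and c :: 'a and n :: nat
  assumes "quasi_category C" and "c \<in> Simp C 0" and "2 \<le> n"
  shows "group (tau (Ce C) n c)"
proof -
  interpret qcat C c n by unfold_locales (rule assms)+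
  show ?thesis by (rule tau_group)
qed

end
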